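(* Let $A,B$ be Hermitian operators on $\mathbb{C}^N$ having $N_A$ and $N_B$ distinct eigenvalues, respectively. If the KD distribution of $(A,B)$ distinguishes all states (i.e. $\rho\mapsto K^{A,B}_\rho$ is injective on density operators on $\mathbb{C}^N$), then $2N^2-1\le(2N_A-1)(2N_B-1)$.
   Context: A density operator is a positive semidefinite trace-one operator. Kirkwood–Dirac (KD) distribution: for Hermitian operators $A_1,\dots,A_n$ on $\mathbb{C}^N$ and a density operator $\rho$, define $\#^{K}_{A_1,\dots,A_n}(x)=(2\pi)^{-n}\int_{\mathbb{R}^n} e^{-is_1A_1}\cdots e^{-is_nA_n}\,e^{i s\cdot x}\,d^ns$ (inverse Fourier transform in the distributional sense), and $K^{A_1,\dots,A_n}_\rho(x)=\mathrm{Tr}[\#^{K}_{A_1,\dots,A_n}(x)\,\rho]$. *)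

theory Defs
  imports "Jordan_Normal_Form.Jordan_Normal_Form" "Jordan_Normal_Form.Schur_Decomposition"
begin

definition hermitian_op :: "nat \<Rightarrow> complex mat \<Rightarrow> bool" where
  "hermitian_op N A \<longleftrightarrow> A \<in> carrier_mat N N \<and> mat_adjoint A = A"

definition mtrace :: "complex mat \<Rightarrow> complex" where
  "mtrace M = (\<Sum>i<dim_row M. M $$ (i, i))"

definition psd_op :: "nat \<Rightarrow> complex mat \<Rightarrow> bool" where
  "psd_op N M \<longleftrightarrow> M \<in> carrier_mat N N \<and>
     (\<forall>v \<in> carrier_vec N. (M *\<^sub>v v) \<bullet>c v \<in> \<real> \<and> 0 \<le> Re ((M *\<^sub>v v) \<bullet>c v))"

definition density_op :: "nat \<Rightarrow> complex mat \<Rightarrow> bool" where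
  "density_op N \<rho> \<longleftrightarrow> psd_op N \<rho> \<and> mtrace \<rho> = 1"

text \<open>Orthogonal (spectral) projector of A onto its eigenspace for the value x
  (the zero matrix if x is not an eigenvalue).\<close>

definition eig_proj :: "nat \<Rightarrow> complex mat \<Rightarrow> complex \<Rightarrow> complex mat" where
  "eig_proj N A x = (THE P. P \<in> carrier_mat N N \<and> mat_adjoint P = P \<and> P * P = P \<and>
      {v \<in> carrier_vec N. P *\<^sub>v v = v} = {v \<in> carrier_vec N. A *\<^sub>v v = x \<cdot>\<^sub>v v})"

text \<open>For Hermitian A = sum a_i P_i,
  B = sum b_j Q_j the distributional inverse Fourier transform of
  exp(-i s1 A) exp(-i s2 B) equals sum_{i,j} delta(x1 - a_i) delta(x2 - b_j) P_i Q_j,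
  so K_rho is the (finitely supported) sum of point masses with weights Tr[P_i Q_j rho].
  We represent it by its weight function on R^2.\<close>

definition KD :: "nat \<Rightarrow> complex mat \<Rightarrow> complex mat \<Rightarrow> complex mat \<Rightarrow> real \<times> real \<Rightarrow> complex" where
  "KD N A B \<rho> = (\<lambda>(x, y). mtrace (eig_proj N A (of_real x) * eig_proj N B (of_real y) * \<rho>))"

definition num_eigenvalues :: "complex mat \<Rightarrow> nat" where
  "num_eigenvalues A = card {x. eigenvalue A x}"

end

theory Submission
  imports Defs "HOL-Library.Function_Algebras"
begin

lemma adj_dim[simp]: "dim_row (mat_adjoint A) = dim_col A" "dim_col (mat_adjoint A) = dim_row A"
  unfolding mat_adjoint_def by auto

lemma adj_index[simp]: "i < dim_col A \<Longrightarrow> j < dim_row A \<Longrightarrow> mat_adjoint A $$ (i,j) = cnj (A $$ (j,i))"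
  unfolding mat_adjoint_def by (simp add: mat_of_rows_index)

lemma herm_carrier: "hermitian_op N A \<Longrightarrow> A \<in> carrier_mat N N"
  unfolding hermitian_op_def by auto

lemma herm_entry: assumes "hermitian_op N A" "i < N" "j < N"
  shows "A $$ (i,j) = cnj (A $$ (j,i))"
proof -
  have c: "A \<in> carrier_mat N N" and e: "mat_adjoint A = A" using assms(1) unfolding hermitian_op_def by auto
  have "A $$ (i,j) = mat_adjoint A $$ (i,j)" using e by simp
  also have "\<dots> = cnj (A $$ (j,i))" using c assms by simp
  finally show ?thesis .
qed

lemma herm_cnj: assumes "hermitian_op N A" "i < N" "j < N"
  shows "cnj (A $$ (j,i)) = A $$ (i,j)"
  using herm_entry[OF assms] by simp

lemma hermI: assumes "A \<in> carrier_mat N N" "\<And>i j. i < N \<Longrightarrow> j < N \<Longrightarrow> A $$ (i,j) = cnj (A $$ (j,i))"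
  shows "hermitian_op N A"
  unfolding hermitian_op_def
proof (intro conjI assms(1))
  show "mat_adjoint A = A"
  proof (rule eq_matI)
    fix i j assume "i < dim_row A" "j < dim_col A"
    then show "mat_adjoint A $$ (i, j) = A $$ (i, j)"
      using assms(1) assms(2)[of j i] by simp
  qed (use assms(1) in auto)
qed

lemma cscalar_expand: "w \<in> carrier_vec n \<Longrightarrow> v \<bullet>c w = (\<Sum>i<n. v $ i * cnj (w $ i))"
  unfolding scalar_prod_def by (auto intro: sum.cong simp: lessThan_atLeast0)

lemma herm_inner: assumes h: "hermitian_op N A" and u: "u \<in> carrier_vec N" and w: "w \<in> carrier_vec N"
  shows "(A *\<^sub>v u) \<bullet>c w = u \<bullet>c (A *\<^sub>v w)"
proof -
  have c: "A \<in> carrier_mat N N" using h herm_carrier by auto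
  have "(A *\<^sub>v u) \<bullet>c w = (\<Sum>i<N. (\<Sum>k<N. A $$ (i,k) * u $ k) * cnj (w $ i))"
    using c u w by (simp add: cscalar_expand scalar_prod_def lessThan_atLeast0)
  also have "\<dots> = (\<Sum>i<N. \<Sum>k<N. A $$ (i,k) * u $ k * cnj (w $ i))"
    by (simp add: sum_distrib_right)
  also have "\<dots> = (\<Sum>k<N. \<Sum>i<N. A $$ (i,k) * u $ k * cnj (w $ i))"
    by (rule sum.swap)
  also have "\<dots> = (\<Sum>k<N. u $ k * cnj (\<Sum>i<N. A $$ (k,i) * w $ i))"
    by (auto intro!: sum.cong simp: sum_distrib_left herm_cnj[OF h] mult_ac)
  also have "\<dots> = u \<bullet>c (A *\<^sub>v w)"
    using c u w by (simp add: cscalar_expand scalar_prod_def lessThan_atLeast0)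
  finally show ?thesis .
qed

lemma cscalar_smult_left: "w \<in> carrier_vec n \<Longrightarrow> v \<in> carrier_vec n \<Longrightarrow> (c \<cdot>\<^sub>v v) \<bullet>c w = c * (v \<bullet>c w)"
  by (simp add: cscalar_expand sum_distrib_left mult_ac)

lemma cscalar_smult_right: "w \<in> carrier_vec n \<Longrightarrow> v \<in> carrier_vec n \<Longrightarrow> v \<bullet>c (c \<cdot>\<^sub>v w) = cnj c * (v \<bullet>c w)"
  by (simp add: cscalar_expand sum_distrib_left mult_ac)

lemma herm_eig_real: assumes h: "hermitian_op N A" and v: "v \<in> carrier_vec N" "v \<noteq> 0\<^sub>v N"
  and e: "A *\<^sub>v v = x \<cdot>\<^sub>v v"
  shows "cnj x = x"
proof -
  have "x * (v \<bullet>c v) = (A *\<^sub>v v) \<bullet>c v" using e v by (simp add: cscalar_smult_left)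
  also have "\<dots> = v \<bullet>c (A *\<^sub>v v)" using herm_inner[OF h v(1) v(1)] .
  also have "\<dots> = cnj x * (v \<bullet>c v)" using e v by (simp add: cscalar_smult_right)
  finally have "x * (v \<bullet>c v) = cnj x * (v \<bullet>c v)" .
  moreover have "v \<bullet>c v \<noteq> 0" using v conjugate_square_eq_0_vec by blast
  ultimately show ?thesis by simp
qed

lemma herm_orth: assumes h: "hermitian_op N A" and u: "u \<in> carrier_vec N" and w: "w \<in> carrier_vec N"
  and eu: "A *\<^sub>v u = a \<cdot>\<^sub>v u" and ew: "A *\<^sub>v w = b \<cdot>\<^sub>v w" and b: "cnj b = b" and ab: "a \<noteq> b"
  shows "u \<bullet>c w = 0"
proof -
  have "a * (u \<bullet>c w) = (A *\<^sub>v u) \<bullet>c w" using eu u w by (simp add: cscalar_smult_left)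
  also have "\<dots> = u \<bullet>c (A *\<^sub>v w)" using herm_inner[OF h u w] .
  also have "\<dots> = b * (u \<bullet>c w)" using ew u w b by (simp add: cscalar_smult_right)
  finally show ?thesis using ab by simp
qed

definition lc :: "nat \<Rightarrow> 'b set \<Rightarrow> ('b \<Rightarrow> complex) \<Rightarrow> ('b \<Rightarrow> complex vec) \<Rightarrow> complex vec" where
  "lc n S c g = vec n (\<lambda>i. \<Sum>a\<in>S. c a * g a $ i)"

lemma lc_carrier[simp]: "lc n S c g \<in> carrier_vec n" and lc_dim[simp]: "dim_vec (lc n S c g) = n"
  unfolding lc_def by auto

lemma lc_index[simp]: "i < n \<Longrightarrow> lc n S c g $ i = (\<Sum>a\<in>S. c a * g a $ i)"
  unfolding lc_def by auto

lemma mult_lc: assumes M: "M \<in> carrier_mat n n" and g: "\<And>a. a \<in> S \<Longrightarrow> g a \<in> carrier_vec n"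
  shows "M *\<^sub>v lc n S c g = lc n S c (\<lambda>a. M *\<^sub>v g a)"
proof (rule eq_vecI)
  fix i assume "i < dim_vec (lc n S c (\<lambda>a. M *\<^sub>v g a))"
  then have i: "i < n" by simp
  have "(M *\<^sub>v lc n S c g) $ i = (\<Sum>k<n. M $$ (i,k) * (\<Sum>a\<in>S. c a * g a $ k))"
    using M i by (simp add: scalar_prod_def lessThan_atLeast0)
  also have "\<dots> = (\<Sum>a\<in>S. \<Sum>k<n. M $$ (i,k) * (c a * g a $ k))"
    by (simp add: sum_distrib_left sum.swap[of _ S])
  also have "\<dots> = (\<Sum>a\<in>S. c a * (M *\<^sub>v g a) $ i)"
  proof -
    have gd: "\<And>a. a \<in> S \<Longrightarrow> dim_vec (g a) = n" using g by auto
    have Md: "dim_row M = n" "dim_col M = n" using M by auto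
    show ?thesis using i by (auto intro!: sum.cong simp: gd Md scalar_prod_def lessThan_atLeast0 sum_distrib_left mult_ac)
  qed
  also have "\<dots> = lc n S c (\<lambda>a. M *\<^sub>v g a) $ i" using i by simp
  finally show "(M *\<^sub>v lc n S c g) $ i = lc n S c (\<lambda>a. M *\<^sub>v g a) $ i" .
qed (use M in auto)

lemma cscalar_dim: "v \<bullet>c w = (\<Sum>i<dim_vec w. v $ i * cnj (w $ i))"
  unfolding scalar_prod_def by (auto intro: sum.cong simp: lessThan_atLeast0)

lemma lc_cscalar_left: assumes w: "w \<in> carrier_vec n"
  shows "lc n S c g \<bullet>c w = (\<Sum>a\<in>S. c a * (g a \<bullet>c w))"
proof -
  have "lc n S c g \<bullet>c w = (\<Sum>i<n. (\<Sum>a\<in>S. c a * g a $ i) * cnj (w $ i))"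
    using w by (simp add: cscalar_expand)
  also have "\<dots> = (\<Sum>a\<in>S. c a * (\<Sum>i<n. g a $ i * cnj (w $ i)))"
    by (simp add: sum_distrib_left sum_distrib_right sum.swap[of _ S] mult_ac)
  also have "\<dots> = (\<Sum>a\<in>S. c a * (g a \<bullet>c w))"
    using w by (simp add: cscalar_expand)
  finally show ?thesis .
qed

lemma lc_cscalar_right: assumes g: "\<And>a. a \<in> S \<Longrightarrow> g a \<in> carrier_vec n"
  shows "v \<bullet>c lc n S c g = (\<Sum>a\<in>S. cnj (c a) * (v \<bullet>c g a))"
proof -
  have "v \<bullet>c lc n S c g = (\<Sum>i<n. v $ i * cnj (\<Sum>a\<in>S. c a * g a $ i))"
    unfolding cscalar_dim by simp
  also have "\<dots> = (\<Sum>a\<in>S. cnj (c a) * (\<Sum>i<n. v $ i * cnj (g a $ i)))"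
    unfolding cnj_sum complex_cnj_mult by (simp add: sum_distrib_left sum_distrib_right sum.swap[of _ S] mult_ac)
  also have "\<dots> = (\<Sum>a\<in>S. cnj (c a) * (v \<bullet>c g a))"
  proof (rule sum.cong[OF refl])
    fix a assume "a \<in> S"
    then have "dim_vec (g a) = n" using g by auto
    then show "cnj (c a) * (\<Sum>i<n. v $ i * cnj (g a $ i)) = cnj (c a) * (v \<bullet>c g a)"
      by (simp add: cscalar_dim)
  qed
  finally show ?thesis .
qed

lemma cscalar_minus_left: fixes u v w :: "complex vec" shows "w \<in> carrier_vec n \<Longrightarrow> u \<in> carrier_vec n \<Longrightarrow> v \<in> carrier_vec n \<Longrightarrow>
  (u - v) \<bullet>c w = u \<bullet>c w - v \<bullet>c w"
  unfolding cscalar_dim by (simp add: sum_subtractf algebra_simps)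

lemma frac_aux: "(a::complex) \<noteq> c \<Longrightarrow> 1 / (a - c) * (a * x) - c * (1 / (a - c) * x) = x"
proof -
  assume "a \<noteq> c"
  then have nz: "a - c \<noteq> 0" by simp
  have "1 / (a - c) * (a * x) - c * (1 / (a - c) * x) = (a * x - c * x) / (a - c)"
    by (simp add: diff_divide_distrib)
  also have "\<dots> = ((a - c) * x) / (a - c)" by (simp add: algebra_simps)
  also have "\<dots> = x" using nz by simp
  finally show ?thesis .
qed

definition eigfam :: "nat \<Rightarrow> complex mat \<Rightarrow> complex set \<Rightarrow> (complex \<Rightarrow> complex vec) \<Rightarrow> bool" where
  "eigfam N A S g \<longleftrightarrow> (\<forall>a\<in>S. g a \<in> carrier_vec N \<and> A *\<^sub>v g a = a \<cdot>\<^sub>v g a)"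

definition good :: "nat \<Rightarrow> complex mat \<Rightarrow> complex set \<Rightarrow> complex vec \<Rightarrow> bool" where
  "good N A S v \<longleftrightarrow> (\<exists>g. eigfam N A S g \<and> v = lc N S (\<lambda>_. 1) g)"

lemma good_step: assumes h: "hermitian_op N A" and S: "finite S" and real: "\<And>a. a \<in> S \<Longrightarrow> cnj a = a"
  and cS: "c \<in> S" and v: "v \<in> carrier_vec N"
  and gd: "good N A S (A *\<^sub>v v - c \<cdot>\<^sub>v v)"
  shows "good N A S v"
proof -
  have Ac: "A \<in> carrier_mat N N" using h herm_carrier by auto
  obtain g where fam: "eigfam N A S g" and eq: "A *\<^sub>v v - c \<cdot>\<^sub>v v = lc N S (\<lambda>_. 1) g"
    using gd unfolding good_def by auto
  have gc: "\<And>a. a \<in> S \<Longrightarrow> g a \<in> carrier_vec N" and ge: "\<And>a. a \<in> S \<Longrightarrow> A *\<^sub>v g a = a \<cdot>\<^sub>v g a"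
    using fam unfolding eigfam_def by auto
  have gdim: "\<And>a. a \<in> S \<Longrightarrow> dim_vec (g a) = N" using gc by auto
  define l where "l = lc N (S - {c}) (\<lambda>a. 1 / (a - c)) g"
  define u where "u = v - l"
  have l: "l \<in> carrier_vec N" unfolding l_def by simp
  have u: "u \<in> carrier_vec N" unfolding u_def using v l by simp
  have Al: "A *\<^sub>v l = lc N (S - {c}) (\<lambda>a. 1 / (a - c)) (\<lambda>a. a \<cdot>\<^sub>v g a)"
  proof -
    have "A *\<^sub>v l = lc N (S - {c}) (\<lambda>a. 1 / (a - c)) (\<lambda>a. A *\<^sub>v g a)"
      unfolding l_def using mult_lc[OF Ac, of "S - {c}" g] gc by auto
    also have "\<dots> = lc N (S - {c}) (\<lambda>a. 1 / (a - c)) (\<lambda>a. a \<cdot>\<^sub>v g a)"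
      unfolding lc_def by (rule eq_vecI, auto simp: ge intro!: sum.cong)
    finally show ?thesis .
  qed
  have Au: "A *\<^sub>v u - c \<cdot>\<^sub>v u = g c"
  proof (rule eq_vecI)
    fix i assume "i < dim_vec (g c)"
    then have i: "i < N" using gc[OF cS] by (simp add: carrier_vecD)
    have e1: "(A *\<^sub>v v) $ i - c * v $ i = (\<Sum>a\<in>S. g a $ i)"
      using arg_cong[OF eq, of "\<lambda>x. x $ i"] i Ac v by simp
    have e2: "(A *\<^sub>v l) $ i - c * l $ i = (\<Sum>a\<in>S - {c}. g a $ i)"
    proof -
      have "(A *\<^sub>v l) $ i - c * l $ i = (\<Sum>a\<in>S - {c}. 1 / (a - c) * (a * g a $ i) - c * (1 / (a - c) * g a $ i))"
        using i gc unfolding Al by (simp add: l_def sum_subtractf sum_distrib_left gdim)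
      also have "\<dots> = (\<Sum>a\<in>S - {c}. g a $ i)"
        by (rule sum.cong[OF refl], rule frac_aux, auto)
      finally show ?thesis .
    qed
    have "(A *\<^sub>v u - c \<cdot>\<^sub>v u) $ i = ((A *\<^sub>v v) $ i - c * v $ i) - ((A *\<^sub>v l) $ i - c * l $ i)"
      unfolding u_def using i Ac v l by (simp add: mult_minus_distrib_mat_vec algebra_simps)
    also have "\<dots> = g c $ i" unfolding e1 e2 using S cS by (simp add: sum.remove)
    finally show "(A *\<^sub>v u - c \<cdot>\<^sub>v u) $ i = g c $ i" .
  qed (use Ac u gdim[OF cS] in simp)
  have gc0: "g c = 0\<^sub>v N"
  proof -
    let ?w = "g c"
    have w: "?w \<in> carrier_vec N" using gc cS by auto
    have "?w \<bullet>c ?w = (A *\<^sub>v u) \<bullet>c ?w - (c \<cdot>\<^sub>v u) \<bullet>c ?w"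
      unfolding Au[symmetric] using Ac u w by (subst cscalar_minus_left, auto)
    also have "\<dots> = u \<bullet>c (A *\<^sub>v ?w) - c * (u \<bullet>c ?w)"
      using herm_inner[OF h u w] cscalar_smult_left[OF w u] by simp
    also have "\<dots> = 0"
      using ge[OF cS] cscalar_smult_right[OF w u] real[OF cS] by simp
    finally show ?thesis using conjugate_square_eq_0_vec[OF w] by simp
  qed
  have Auc: "A *\<^sub>v u = c \<cdot>\<^sub>v u"
  proof (rule eq_vecI)
    fix i assume i: "i < dim_vec (c \<cdot>\<^sub>v u)"
    show "(A *\<^sub>v u) $ i = (c \<cdot>\<^sub>v u) $ i"
      using arg_cong[OF Au, of "\<lambda>x. x $ i"] gc0 i u Ac by simp
  qed (use Ac u in simp)
  define g' where "g' = (\<lambda>a. if a = c then u else (1 / (a - c)) \<cdot>\<^sub>v g a)"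
  have fam': "eigfam N A S g'"
    unfolding eigfam_def g'_def
    using u Auc gc ge Ac by (auto simp: mult_mat_vec[OF Ac])
  have "v = lc N S (\<lambda>_. 1) g'"
  proof (rule eq_vecI)
    fix i assume "i < dim_vec (lc N S (\<lambda>_. 1) g')"
    then have i: "i < N" by simp
    have "lc N S (\<lambda>_. 1) g' $ i = u $ i + (\<Sum>a\<in>S - {c}. g' a $ i)"
      using i S cS by (simp add: sum.remove g'_def)
    also have "(\<Sum>a\<in>S - {c}. g' a $ i) = l $ i"
      using i gc by (auto simp: l_def g'_def gdim intro!: sum.cong)
    finally show "v $ i = lc N S (\<lambda>_. 1) g' $ i" using i v l by (simp add: u_def)
  qed (use v in simp)
  then show ?thesis using fam' unfolding good_def by auto
qed

lemma poly_linear_prod_root: "poly (\<Prod>e\<leftarrow>es. [:- e, 1:]) x = 0 \<longleftrightarrow> x \<in> set (es :: complex list)"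
  by (induction es) auto

lemma sum_single: assumes "finite A" "i \<in> A" "\<And>j. j \<in> A \<Longrightarrow> j \<noteq> i \<Longrightarrow> f j = 0"
  shows "sum f A = f i"
proof -
  have "sum f A = f i + sum f (A - {i})" using assms(1,2) by (rule sum.remove)
  moreover have "sum f (A - {i}) = 0" using assms(3) by (intro sum.neutral) auto
  ultimately show ?thesis by simp
qed

lemma herm_spec_facts: assumes h: "hermitian_op N A"
  shows "finite {x. eigenvalue A x}" "\<And>a. eigenvalue A a \<Longrightarrow> cnj a = a"
proof -
  have Ac: "A \<in> carrier_mat N N" using h herm_carrier by auto
  have "degree (char_poly A) = N \<and> coeff (char_poly A) N = 1" using degree_monic_char_poly[OF Ac] .
  then have "char_poly A \<noteq> 0" by auto
  then have "finite {x. poly (char_poly A) x = 0}" by (rule poly_roots_finite)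
  then show "finite {x. eigenvalue A x}" using eigenvalue_root_char_poly[OF Ac] by simp
  fix a assume "eigenvalue A a"
  then obtain v where "eigenvector A v a" unfolding eigenvalue_def by auto
  then have "v \<in> carrier_vec N" "v \<noteq> 0\<^sub>v N" "A *\<^sub>v v = a \<cdot>\<^sub>v v" using Ac unfolding eigenvector_def by auto
  then show "cnj a = a" using herm_eig_real[OF h] by blast
qed

lemma all_good: assumes h: "hermitian_op N A"
  shows "\<And>v. v \<in> carrier_vec N \<Longrightarrow> good N A {x. eigenvalue A x} v"
    and "N > 0 \<Longrightarrow> {x. eigenvalue A x} \<noteq> {}"
proof -
  let ?S = "{x. eigenvalue A x}"
  have Ac: "A \<in> carrier_mat N N" using h herm_carrier by auto
  have dm: "degree (char_poly A) = N \<and> coeff (char_poly A) N = 1" using degree_monic_char_poly[OF Ac] .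
  obtain es where es: "Polynomial.smult (lead_coeff (char_poly A)) (\<Prod>a\<leftarrow>es. [:- a, 1:]) = char_poly A"
    and les: "length es = degree (char_poly A)"
    using fundamental_theorem_algebra_factorized by blast
  have cp: "char_poly A = (\<Prod>a\<leftarrow>es. [:- a, 1:])" using es dm by simp
  have esev: "\<And>e. e \<in> set es \<Longrightarrow> eigenvalue A e"
    using eigenvalue_root_char_poly[OF Ac] cp poly_linear_prod_root by simp
  show "N > 0 \<Longrightarrow> ?S \<noteq> {}"
  proof -
    assume "N > 0"
    then have "es \<noteq> []" using les dm by auto
    then have "hd es \<in> set es" by simp
    then show ?thesis using esev by auto
  qed
  have fin: "finite ?S" and real: "\<And>a. a \<in> ?S \<Longrightarrow> cnj a = a" using herm_spec_facts[OF h] by auto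
  obtain T P Q where sd: "schur_decomposition A es = (T,P,Q)" by (cases "schur_decomposition A es", auto)
  from schur_decomposition[OF Ac cp sd]
  have sim: "similar_mat_wit A T P Q" and ut: "upper_triangular T" and dg: "diag_mat T = es" by auto
  have Tc: "T \<in> carrier_mat N N" and Pc: "P \<in> carrier_mat N N" and Qc: "Q \<in> carrier_mat N N"
    and PQ: "P * Q = 1\<^sub>m N" and QP: "Q * P = 1\<^sub>m N" and AT: "A = P * T * Q"
    using sim Ac unfolding similar_mat_wit_def Let_def by auto
  have Tev: "\<And>k. k < N \<Longrightarrow> T $$ (k,k) \<in> ?S"
  proof -
    fix k assume "k < N"
    then have "T $$ (k,k) \<in> set (diag_mat T)" using Tc unfolding diag_mat_def by auto
    then show "T $$ (k,k) \<in> ?S" using dg esev by auto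
  qed
  have QA: "Q * A = T * Q"
  proof -
    have "Q * A = Q * (P * (T * Q))" unfolding AT using Pc Tc Qc by simp
    also have "\<dots> = (Q * P) * (T * Q)" by (rule assoc_mult_mat[symmetric], insert Qc Pc Tc, auto)
    also have "\<dots> = T * Q" unfolding QP using Tc Qc by simp
    finally show ?thesis .
  qed
  have good0: "good N A ?S (0\<^sub>v N)"
  proof -
    have "eigfam N A ?S (\<lambda>_. 0\<^sub>v N)" unfolding eigfam_def using Ac by auto
    moreover have "0\<^sub>v N = lc N ?S (\<lambda>_. 1) (\<lambda>_. 0\<^sub>v N)" by (rule eq_vecI) auto
    ultimately show ?thesis unfolding good_def by blast
  qed
  have main: "k \<le> N \<Longrightarrow> \<forall>v \<in> carrier_vec N. (\<forall>i. k \<le> i \<longrightarrow> i < N \<longrightarrow> (Q *\<^sub>v v) $ i = 0) \<longrightarrow> good N A ?S v" for k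
  proof (induction k)
    case 0
    show ?case proof (intro ballI impI)
    fix v assume v: "v \<in> carrier_vec N" and z: "\<forall>i. 0 \<le> i \<longrightarrow> i < N \<longrightarrow> (Q *\<^sub>v v) $ i = 0"
    have "Q *\<^sub>v v = 0\<^sub>v N" using z Qc v by (intro eq_vecI, auto)
    then have "v = P *\<^sub>v 0\<^sub>v N"
      using assoc_mult_mat_vec[OF Pc Qc v] PQ v by simp
    also have "\<dots> = 0\<^sub>v N" using Pc by (intro eq_vecI, auto)
    finally show "good N A ?S v" using good0 by simp
    qed
  next
    case (Suc k)
    then have kN: "Suc k \<le> N" by simp
    show ?case proof (intro ballI impI)
    fix v assume v: "v \<in> carrier_vec N" and z: "\<forall>i. Suc k \<le> i \<longrightarrow> i < N \<longrightarrow> (Q *\<^sub>v v) $ i = 0"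
    define c where "c = T $$ (k,k)"
    have cS: "c \<in> ?S" unfolding c_def using Tev kN by auto
    define w where "w = A *\<^sub>v v - c \<cdot>\<^sub>v v"
    have w: "w \<in> carrier_vec N" unfolding w_def using Ac v by auto
    define u where "u = Q *\<^sub>v v"
    have u: "u \<in> carrier_vec N" unfolding u_def using Qc v by auto
    have Qw: "Q *\<^sub>v w = T *\<^sub>v u - c \<cdot>\<^sub>v u"
    proof -
      have "Q *\<^sub>v w = Q *\<^sub>v (A *\<^sub>v v) - Q *\<^sub>v (c \<cdot>\<^sub>v v)"
        unfolding w_def using Qc Ac v by (subst mult_minus_distrib_mat_vec, auto)
      also have "Q *\<^sub>v (A *\<^sub>v v) = T *\<^sub>v u"
        unfolding u_def using assoc_mult_mat_vec[OF Qc Ac v] assoc_mult_mat_vec[OF Tc Qc v] QA by simp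
      also have "Q *\<^sub>v (c \<cdot>\<^sub>v v) = c \<cdot>\<^sub>v u" unfolding u_def using mult_mat_vec[OF Qc v] .
      finally show ?thesis .
    qed
    have zw: "\<forall>i. k \<le> i \<longrightarrow> i < N \<longrightarrow> (Q *\<^sub>v w) $ i = 0"
    proof (intro allI impI)
      fix i assume ki: "k \<le> i" and iN: "i < N"
      have uz: "\<And>j. Suc k \<le> j \<Longrightarrow> j < N \<Longrightarrow> u $ j = 0" using z unfolding u_def by auto
      have "(T *\<^sub>v u) $ i = (\<Sum>j<N. T $$ (i,j) * u $ j)"
        using Tc u iN by (simp add: scalar_prod_def lessThan_atLeast0)
      also have "\<dots> = T $$ (i,i) * u $ i"
      proof (rule sum_single)
        show "finite {..<N}" by simp
        show "i \<in> {..<N}" using iN by simp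
        fix j assume j: "j \<in> {..<N}" "j \<noteq> i"
        show "T $$ (i,j) * u $ j = 0"
        proof (cases "j < i")
          case True then show ?thesis using ut Tc iN by (simp add: upper_triangularD)
        next
          case False then have "Suc k \<le> j" using j ki by auto
          then show ?thesis using uz j by simp
        qed
      qed
      finally have Tu: "(T *\<^sub>v u) $ i = T $$ (i,i) * u $ i" .
      show "(Q *\<^sub>v w) $ i = 0"
      proof (cases "i = k")
        case True then show ?thesis unfolding Qw using Tu iN u Tc by (simp add: c_def)
      next
        case False then have "Suc k \<le> i" using ki by auto
        then show ?thesis unfolding Qw using Tu iN u Tc uz by simp
      qed
    qed
    have "good N A ?S w" using Suc.IH kN w zw by simp
    then show "good N A ?S v" using good_step[OF h fin real cS v] unfolding w_def by simp
    qed
  qed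
  fix v :: "complex vec" assume "v \<in> carrier_vec N"
  then show "good N A ?S v" using main[of N] by simp
qed

lemma mat_unit_entry: fixes M :: "complex mat" assumes M: "M \<in> carrier_mat n n" and i: "i < n" and j: "j < n"
  shows "(M *\<^sub>v unit_vec n j) $ i = M $$ (i,j)"
proof -
  have "(M *\<^sub>v unit_vec n j) $ i = (\<Sum>k<n. M $$ (i,k) * unit_vec n j $ k)"
    using M i by (simp add: scalar_prod_def lessThan_atLeast0)
  also have "\<dots> = M $$ (i,j) * unit_vec n j $ j"
    by (rule sum_single, use j in auto)
  finally show ?thesis using j by simp
qed

lemma cscalar_unit_right: fixes x :: "complex vec" assumes x: "x \<in> carrier_vec n" and i: "i < n"
  shows "x \<bullet>c unit_vec n i = x $ i"
proof -
  have "x \<bullet>c unit_vec n i = (\<Sum>k<n. x $ k * cnj (unit_vec n i $ k))" by (simp add: cscalar_dim)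
  also have "\<dots> = x $ i * cnj (unit_vec n i $ i)" by (rule sum_single, use i in auto)
  finally show ?thesis using i by simp
qed

lemma cscalar_unit_left: fixes x :: "complex vec" assumes x: "x \<in> carrier_vec n" and i: "i < n"
  shows "unit_vec n i \<bullet>c x = cnj (x $ i)"
proof -
  have "unit_vec n i \<bullet>c x = (\<Sum>k<n. unit_vec n i $ k * cnj (x $ k))" using x by (simp add: cscalar_dim)
  also have "\<dots> = unit_vec n i $ i * cnj (x $ i)" by (rule sum_single, use i in auto)
  finally show ?thesis using i by simp
qed

lemma mat_eq_by_vec: fixes M :: "complex mat" assumes M: "M \<in> carrier_mat n n" and M': "M' \<in> carrier_mat n n"
  and eq: "\<And>v. v \<in> carrier_vec n \<Longrightarrow> M *\<^sub>v v = M' *\<^sub>v v"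
  shows "M = M'"
proof (rule eq_matI)
  fix i j assume "i < dim_row M'" "j < dim_col M'"
  then have i: "i < n" and j: "j < n" using M' by auto
  show "M $$ (i,j) = M' $$ (i,j)"
    using mat_unit_entry[OF M i j] mat_unit_entry[OF M' i j] eq[of "unit_vec n j"] by simp
qed (use M M' in auto)

lemma proj_unique: fixes P :: "complex mat" assumes P: "P \<in> carrier_mat N N" "mat_adjoint P = P" "P * P = P"
  and P': "P' \<in> carrier_mat N N" "mat_adjoint P' = P'" "P' * P' = P'"
  and fx: "{v \<in> carrier_vec N. P *\<^sub>v v = v} = {v \<in> carrier_vec N. P' *\<^sub>v v = v}"
  shows "P = P'"
proof -
  have h: "hermitian_op N P" "hermitian_op N P'" using P P' unfolding hermitian_op_def by auto
  have l1: "P' * P = P"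
  proof (rule mat_eq_by_vec[of _ N])
    fix v :: "complex vec" assume v: "v \<in> carrier_vec N"
    have "P *\<^sub>v (P *\<^sub>v v) = P *\<^sub>v v" using assoc_mult_mat_vec[OF P(1) P(1) v] P(3) by simp
    then have "P *\<^sub>v v \<in> {v \<in> carrier_vec N. P *\<^sub>v v = v}" using P(1) v by auto
    then have "P' *\<^sub>v (P *\<^sub>v v) = P *\<^sub>v v" using fx by auto
    then show "(P' * P) *\<^sub>v v = P *\<^sub>v v" using assoc_mult_mat_vec[OF P'(1) P(1) v] by simp
  qed (use P P' in auto)
  have l2: "P * P' = P'"
  proof (rule mat_eq_by_vec[of _ N])
    fix v :: "complex vec" assume v: "v \<in> carrier_vec N"
    have "P' *\<^sub>v (P' *\<^sub>v v) = P' *\<^sub>v v" using assoc_mult_mat_vec[OF P'(1) P'(1) v] P'(3) by simp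
    then have "P' *\<^sub>v v \<in> {v \<in> carrier_vec N. P' *\<^sub>v v = v}" using P'(1) v by auto
    then have "P *\<^sub>v (P' *\<^sub>v v) = P' *\<^sub>v v" using fx by auto
    then show "(P * P') *\<^sub>v v = P' *\<^sub>v v" using assoc_mult_mat_vec[OF P(1) P'(1) v] by simp
  qed (use P P' in auto)
  show ?thesis
  proof (rule eq_matI)
    fix i j assume "i < dim_row P'" "j < dim_col P'"
    then have i: "i < N" and j: "j < N" using P' by auto
    have "P $$ (i,j) = cnj (P $$ (j,i))" using herm_entry[OF h(1) i j] .
    also have "P $$ (j,i) = (\<Sum>k<N. P' $$ (j,k) * P $$ (k,i))"
      using arg_cong[OF l1, of "\<lambda>M. M $$ (j,i)"] P P' i j by (simp add: scalar_prod_def lessThan_atLeast0)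
    also have "cnj \<dots> = (\<Sum>k<N. P $$ (i,k) * P' $$ (k,j))"
      unfolding cnj_sum complex_cnj_mult
      by (rule sum.cong, auto simp: herm_cnj[OF h(1)] herm_cnj[OF h(2)] i j mult.commute)
    also have "\<dots> = P' $$ (i,j)"
      using arg_cong[OF l2, of "\<lambda>M. M $$ (i,j)"] P P' i j by (simp add: scalar_prod_def lessThan_atLeast0)
    finally show "P $$ (i,j) = P' $$ (i,j)" .
  qed (use P P' in auto)
qed

context
  fixes N :: nat and A :: "complex mat"
  assumes h: "hermitian_op N A"
begin

abbreviation "SP \<equiv> {x. eigenvalue A x}"

lemma Ac: "A \<in> carrier_mat N N" using h herm_carrier by auto

lemma SP_fin: "finite SP" and SP_real: "a \<in> SP \<Longrightarrow> cnj a = a"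
  using herm_spec_facts[OF h] by auto

lemma dec_unique: assumes g: "eigfam N A SP g" and g': "eigfam N A SP g'"
  and eq: "lc N SP (\<lambda>_. 1) g = lc N SP (\<lambda>_. 1) g'" and a: "a \<in> SP"
  shows "g a = g' a"
proof -
  have gc: "\<And>b. b \<in> SP \<Longrightarrow> g b \<in> carrier_vec N" and ge: "\<And>b. b \<in> SP \<Longrightarrow> A *\<^sub>v g b = b \<cdot>\<^sub>v g b"
    using g unfolding eigfam_def by auto
  have gc': "\<And>b. b \<in> SP \<Longrightarrow> g' b \<in> carrier_vec N" and ge': "\<And>b. b \<in> SP \<Longrightarrow> A *\<^sub>v g' b = b \<cdot>\<^sub>v g' b"
    using g' unfolding eigfam_def by auto
  define d where "d = (\<lambda>b. g b - g' b)"
  have dc: "\<And>b. b \<in> SP \<Longrightarrow> d b \<in> carrier_vec N" unfolding d_def using gc gc' by auto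
  have de: "\<And>b. b \<in> SP \<Longrightarrow> A *\<^sub>v d b = b \<cdot>\<^sub>v d b"
  proof -
    fix b assume b: "b \<in> SP"
    have "A *\<^sub>v d b = A *\<^sub>v g b - A *\<^sub>v g' b" unfolding d_def using Ac gc[OF b] gc'[OF b]
      by (simp add: mult_minus_distrib_mat_vec)
    also have "\<dots> = b \<cdot>\<^sub>v d b" unfolding ge[OF b] ge'[OF b] d_def
      using gc[OF b] gc'[OF b] by (intro eq_vecI, auto simp: algebra_simps)
    finally show "A *\<^sub>v d b = b \<cdot>\<^sub>v d b" .
  qed
  have dz: "lc N SP (\<lambda>_. 1) d = 0\<^sub>v N"
  proof (rule eq_vecI)
    fix i assume "i < dim_vec (0\<^sub>v N :: complex vec)"
    then have i: "i < N" by simp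
    have "(\<Sum>b\<in>SP. g b $ i) = (\<Sum>b\<in>SP. g' b $ i)" using arg_cong[OF eq, of "\<lambda>x. x $ i"] i by simp
    then show "lc N SP (\<lambda>_. 1) d $ i = 0\<^sub>v N $ i"
    proof -
      have gd: "\<And>b. b \<in> SP \<Longrightarrow> dim_vec (g b) = N" "\<And>b. b \<in> SP \<Longrightarrow> dim_vec (g' b) = N"
        using gc gc' by auto
      show ?thesis using i \<open>(\<Sum>b\<in>SP. g b $ i) = (\<Sum>b\<in>SP. g' b $ i)\<close>
        by (simp add: d_def sum_subtractf gd)
    qed
  qed simp
  have "d a \<bullet>c d a = lc N SP (\<lambda>_. 1) d \<bullet>c d a"
  proof -
    have "lc N SP (\<lambda>_. 1) d \<bullet>c d a = (\<Sum>b\<in>SP. 1 * (d b \<bullet>c d a))"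
      using lc_cscalar_left[OF dc[OF a]] .
    also have "\<dots> = 1 * (d a \<bullet>c d a)"
    proof (rule sum_single[OF SP_fin a])
      fix b assume b: "b \<in> SP" "b \<noteq> a"
      show "1 * (d b \<bullet>c d a) = 0"
        using herm_orth[OF h dc[OF b(1)] dc[OF a] de[OF b(1)] de[OF a] SP_real[OF a] b(2)] by simp
    qed
    finally show ?thesis by simp
  qed
  also have "\<dots> = 0" unfolding dz using dc[OF a] by (simp add: cscalar_dim)
  finally have "d a = 0\<^sub>v N" using conjugate_square_eq_0_vec[OF dc[OF a]] by simp
  show ?thesis
  proof (rule eq_vecI)
    fix i assume "i < dim_vec (g' a)"
    then have i: "i < N" using gc'[OF a] by auto
    have "(g a - g' a) $ i = 0" using \<open>d a = 0\<^sub>v N\<close> i unfolding d_def by simp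
    then show "g a $ i = g' a $ i" using i gc[OF a] gc'[OF a] by simp
  qed (use gc[OF a] gc'[OF a] in auto)
qed

definition dec :: "complex vec \<Rightarrow> complex \<Rightarrow> complex vec" where
  "dec v = (SOME g. eigfam N A SP g \<and> v = lc N SP (\<lambda>_. 1) g)"

lemma dec_spec: assumes v: "v \<in> carrier_vec N"
  shows "eigfam N A SP (dec v)" "v = lc N SP (\<lambda>_. 1) (dec v)"
proof -
  have "\<exists>g. eigfam N A SP g \<and> v = lc N SP (\<lambda>_. 1) g" using all_good(1)[OF h v] unfolding good_def .
  from someI_ex[OF this] show "eigfam N A SP (dec v)" "v = lc N SP (\<lambda>_. 1) (dec v)"
    unfolding dec_def by auto
qed

lemma dec_eq: assumes v: "v \<in> carrier_vec N" and g: "eigfam N A SP g" and e: "v = lc N SP (\<lambda>_. 1) g"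
  and a: "a \<in> SP"
  shows "dec v a = g a"
  using dec_unique[OF dec_spec(1)[OF v] g _ a] dec_spec(2)[OF v] e by simp

lemma dec_carrier: "v \<in> carrier_vec N \<Longrightarrow> a \<in> SP \<Longrightarrow> dec v a \<in> carrier_vec N"
  and dec_eig: "v \<in> carrier_vec N \<Longrightarrow> a \<in> SP \<Longrightarrow> A *\<^sub>v dec v a = a \<cdot>\<^sub>v dec v a"
  using dec_spec(1) unfolding eigfam_def by auto

definition proj :: "complex \<Rightarrow> complex mat" where
  "proj a = mat N N (\<lambda>(i,j). dec (unit_vec N j) a $ i)"

lemma proj_carrier: "proj a \<in> carrier_mat N N" unfolding proj_def by auto

lemma proj_mult: assumes v: "v \<in> carrier_vec N" and a: "a \<in> SP"
  shows "proj a *\<^sub>v v = dec v a"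
proof -
  define g where "g = (\<lambda>b. lc N {..<N} (\<lambda>j. v $ j) (\<lambda>j. dec (unit_vec N j) b))"
  have pg: "\<And>b. proj b *\<^sub>v v = g b"
  proof -
    fix b
    show "proj b *\<^sub>v v = g b"
      unfolding g_def proj_def using v
      by (intro eq_vecI, auto simp: scalar_prod_def lessThan_atLeast0 mult.commute intro!: sum.cong)
  qed
  have fam: "eigfam N A SP g"
    unfolding eigfam_def
  proof (intro ballI conjI)
    fix b assume b: "b \<in> SP"
    show "g b \<in> carrier_vec N" unfolding g_def by simp
    have dd: "\<And>v. v \<in> carrier_vec N \<Longrightarrow> dim_vec (dec v b) = N" using dec_carrier[OF _ b] by auto
    have "A *\<^sub>v g b = lc N {..<N} (\<lambda>j. v $ j) (\<lambda>j. A *\<^sub>v dec (unit_vec N j) b)"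
      unfolding g_def by (rule mult_lc[OF Ac], rule dec_carrier[OF _ b], simp)
    also have "\<dots> = lc N {..<N} (\<lambda>j. v $ j) (\<lambda>j. b \<cdot>\<^sub>v dec (unit_vec N j) b)"
      using dec_eig[OF _ b] by simp
    also have "\<dots> = b \<cdot>\<^sub>v g b"
      unfolding g_def using dec_carrier[OF _ b]
      by (intro eq_vecI, auto simp: dd simp: sum_distrib_left mult_ac intro!: sum.cong)
    finally show "A *\<^sub>v g b = b \<cdot>\<^sub>v g b" .
  qed
  have "v = lc N SP (\<lambda>_. 1) g"
  proof (rule eq_vecI)
    fix i assume "i < dim_vec (lc N SP (\<lambda>_. 1) g)"
    then have i: "i < N" by simp
    have uj: "\<And>j. j < N \<Longrightarrow> unit_vec N j $ i = (\<Sum>b\<in>SP. dec (unit_vec N j) b $ i)"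
      using dec_spec(2)[of "unit_vec N _"] i
      by (metis (no_types, lifting) lc_index mult_1 sum.cong unit_vec_carrier)
    have "lc N SP (\<lambda>_. 1) g $ i = (\<Sum>b\<in>SP. \<Sum>j<N. v $ j * dec (unit_vec N j) b $ i)"
      using i unfolding g_def by simp
    also have "\<dots> = (\<Sum>j<N. v $ j * (\<Sum>b\<in>SP. dec (unit_vec N j) b $ i))"
      by (simp add: sum.swap[of _ SP] sum_distrib_left)
    also have "\<dots> = (\<Sum>j<N. v $ j * unit_vec N j $ i)" using uj by simp
    also have "\<dots> = v $ i * unit_vec N i $ i" by (rule sum_single, use i in auto)
    finally show "v $ i = lc N SP (\<lambda>_. 1) g $ i" using i by simp
  qed (use v in simp)
  then have "dec v a = g a" using dec_eq[OF v fam _ a] by simp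
  then show ?thesis using pg by simp
qed

lemma proj_fix: assumes v: "v \<in> carrier_vec N" and a: "a \<in> SP"
  shows "proj a *\<^sub>v v = v \<longleftrightarrow> A *\<^sub>v v = a \<cdot>\<^sub>v v"
proof
  assume "proj a *\<^sub>v v = v"
  then have "dec v a = v" using proj_mult[OF v a] by simp
  then show "A *\<^sub>v v = a \<cdot>\<^sub>v v" using dec_eig[OF v a] by simp
next
  assume e: "A *\<^sub>v v = a \<cdot>\<^sub>v v"
  define g where "g = (\<lambda>b. if b = a then v else 0\<^sub>v N)"
  have fam: "eigfam N A SP g" unfolding eigfam_def g_def using v e Ac by auto
  have "v = lc N SP (\<lambda>_. 1) g"
  proof (rule eq_vecI)
    fix i assume "i < dim_vec (lc N SP (\<lambda>_. 1) g)"
    then have i: "i < N" by simp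
    have "lc N SP (\<lambda>_. 1) g $ i = 1 * g a $ i"
      using i by (simp only: lc_index, intro sum_single[OF SP_fin a], auto simp: g_def)
    then show "v $ i = lc N SP (\<lambda>_. 1) g $ i" by (simp add: g_def)
  qed (use v in simp)
  then have "dec v a = v" using dec_eq[OF v fam _ a] by (simp add: g_def)
  then show "proj a *\<^sub>v v = v" using proj_mult[OF v a] by simp
qed

lemma proj_idem: assumes a: "a \<in> SP" shows "proj a * proj a = proj a"
proof (rule mat_eq_by_vec[of _ N])
  fix v :: "complex vec" assume v: "v \<in> carrier_vec N"
  have "(proj a * proj a) *\<^sub>v v = proj a *\<^sub>v dec v a"
    using assoc_mult_mat_vec[OF proj_carrier proj_carrier v] proj_mult[OF v a] by simp
  also have "\<dots> = dec v a" using proj_fix[OF dec_carrier[OF v a] a] dec_eig[OF v a] by simp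
  finally show "(proj a * proj a) *\<^sub>v v = proj a *\<^sub>v v" using proj_mult[OF v a] by simp
qed (insert proj_carrier[of a], auto)

lemma proj_inner: assumes u: "u \<in> carrier_vec N" and w: "w \<in> carrier_vec N" and a: "a \<in> SP"
  shows "(proj a *\<^sub>v u) \<bullet>c w = u \<bullet>c (proj a *\<^sub>v w)"
proof -
  have orth: "\<And>x y b c. x \<in> carrier_vec N \<Longrightarrow> y \<in> carrier_vec N \<Longrightarrow> b \<in> SP \<Longrightarrow> c \<in> SP \<Longrightarrow> b \<noteq> c
     \<Longrightarrow> dec x b \<bullet>c dec y c = 0"
    using herm_orth[OF h dec_carrier dec_carrier dec_eig dec_eig SP_real] by blast
  have "(proj a *\<^sub>v u) \<bullet>c w = dec u a \<bullet>c lc N SP (\<lambda>_. 1) (dec w)"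
    using proj_mult[OF u a] dec_spec(2)[OF w] by simp
  also have "\<dots> = (\<Sum>b\<in>SP. cnj 1 * (dec u a \<bullet>c dec w b))"
    by (rule lc_cscalar_right, rule dec_carrier[OF w])
  also have "\<dots> = cnj 1 * (dec u a \<bullet>c dec w a)"
    by (rule sum_single[OF SP_fin a], use orth[OF u w a] in auto)
  also have "\<dots> = 1 * (dec u a \<bullet>c dec w a)" by simp
  also have "\<dots> = (\<Sum>b\<in>SP. 1 * (dec u b \<bullet>c dec w a))"
    by (rule sum_single[OF SP_fin a, symmetric], use orth[OF u w _ a] in auto)
  also have "\<dots> = lc N SP (\<lambda>_. 1) (dec u) \<bullet>c dec w a"
    by (rule lc_cscalar_left[symmetric], rule dec_carrier[OF w a])
  also have "\<dots> = u \<bullet>c (proj a *\<^sub>v w)"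
    using proj_mult[OF w a] dec_spec(2)[OF u] by simp
  finally show ?thesis .
qed

lemma proj_herm: assumes a: "a \<in> SP" shows "hermitian_op N (proj a)"
proof (rule hermI[OF proj_carrier])
  fix i j assume i: "i < N" and j: "j < N"
  have c1: "proj a *\<^sub>v unit_vec N j \<in> carrier_vec N" using proj_carrier[of a] by auto
  have c2: "proj a *\<^sub>v unit_vec N i \<in> carrier_vec N" using proj_carrier[of a] by auto
  have "proj a $$ (i,j) = (proj a *\<^sub>v unit_vec N j) \<bullet>c unit_vec N i"
    using mat_unit_entry[OF proj_carrier[of a] i j] cscalar_unit_right[OF c1 i] by simp
  also have "\<dots> = unit_vec N j \<bullet>c (proj a *\<^sub>v unit_vec N i)"
    by (rule proj_inner[OF _ _ a], auto)
  also have "\<dots> = cnj (proj a $$ (j,i))"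
    using mat_unit_entry[OF proj_carrier[of a] j i] cscalar_unit_left[OF c2 j] by simp
  finally show "proj a $$ (i,j) = cnj (proj a $$ (j,i))" .
qed

lemma proj_sum: assumes i: "i < N" and j: "j < N"
  shows "(\<Sum>a\<in>SP. proj a $$ (i,j)) = (if i = j then 1 else 0)"
proof -
  have "(\<Sum>a\<in>SP. proj a $$ (i,j)) = (\<Sum>a\<in>SP. 1 * dec (unit_vec N j) a $ i)"
    unfolding proj_def using i j by simp
  also have "\<dots> = lc N SP (\<lambda>_. 1) (dec (unit_vec N j)) $ i" using i by simp
  also have "\<dots> = unit_vec N j $ i" using dec_spec(2)[of "unit_vec N j"] by simp
  finally show ?thesis using i j by simp
qed

lemma eig_proj_eq: assumes a: "a \<in> SP" shows "eig_proj N A a = proj a"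
  unfolding eig_proj_def
proof (rule the_equality)
  have herm: "hermitian_op N (proj a)" by (rule proj_herm[OF a])
  show "proj a \<in> carrier_mat N N \<and> mat_adjoint (proj a) = proj a \<and> proj a * proj a = proj a \<and>
    {v \<in> carrier_vec N. proj a *\<^sub>v v = v} = {v \<in> carrier_vec N. A *\<^sub>v v = a \<cdot>\<^sub>v v}"
    using herm proj_idem[OF a] proj_fix[OF _ a] unfolding hermitian_op_def by auto
  fix P assume P: "P \<in> carrier_mat N N \<and> mat_adjoint P = P \<and> P * P = P \<and>
    {v \<in> carrier_vec N. P *\<^sub>v v = v} = {v \<in> carrier_vec N. A *\<^sub>v v = a \<cdot>\<^sub>v v}"
  show "P = proj a"
    by (rule proj_unique, use P herm proj_idem[OF a] proj_fix[OF _ a] in \<open>auto simp: hermitian_op_def\<close>)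
qed

lemma eig_proj_zero: assumes a: "a \<notin> SP" shows "eig_proj N A a = 0\<^sub>m N N"
  unfolding eig_proj_def
proof (rule the_equality)
  have z: "{v \<in> carrier_vec N. (0\<^sub>m N N :: complex mat) *\<^sub>v v = v} = {0\<^sub>v N}"
  proof -
    have "(0\<^sub>m N N :: complex mat) *\<^sub>v v = 0\<^sub>v N" if "v \<in> carrier_vec N" for v :: "complex vec"
      using that by (intro eq_vecI, auto simp: scalar_prod_def intro!: sum.neutral)
    then show ?thesis by auto
  qed
  have e: "{v \<in> carrier_vec N. A *\<^sub>v v = a \<cdot>\<^sub>v v} = {0\<^sub>v N}"
  proof -
    have "v = 0\<^sub>v N" if "v \<in> carrier_vec N" "A *\<^sub>v v = a \<cdot>\<^sub>v v" for v
    proof (rule ccontr)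
      assume "v \<noteq> 0\<^sub>v N"
      then have "eigenvector A v a" using that Ac unfolding eigenvector_def by auto
      then show False using a unfolding eigenvalue_def by auto
    qed
    moreover have "A *\<^sub>v 0\<^sub>v N = a \<cdot>\<^sub>v 0\<^sub>v N" using Ac by (intro eq_vecI, auto)
    ultimately show ?thesis by auto
  qed
  have ad: "mat_adjoint (0\<^sub>m N N :: complex mat) = 0\<^sub>m N N" by (intro eq_matI, auto)
  show "(0\<^sub>m N N :: complex mat) \<in> carrier_mat N N \<and> mat_adjoint (0\<^sub>m N N :: complex mat) = 0\<^sub>m N N \<and> 0\<^sub>m N N * 0\<^sub>m N N = (0\<^sub>m N N :: complex mat) \<and>
    {v \<in> carrier_vec N. 0\<^sub>m N N *\<^sub>v v = v} = {v \<in> carrier_vec N. A *\<^sub>v v = a \<cdot>\<^sub>v v}"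
    using z e ad by auto
  fix P assume P: "P \<in> carrier_mat N N \<and> mat_adjoint P = P \<and> P * P = P \<and>
    {v \<in> carrier_vec N. P *\<^sub>v v = v} = {v \<in> carrier_vec N. A *\<^sub>v v = a \<cdot>\<^sub>v v}"
  show "P = 0\<^sub>m N N"
    by (rule proj_unique, use P z e ad in auto)
qed

end

definition rscale :: "real \<Rightarrow> ('z \<Rightarrow> complex) \<Rightarrow> ('z \<Rightarrow> complex)" where
  "rscale r f = (\<lambda>z. complex_of_real r * f z)"

lemma rscale_vs: "vector_space rscale"
  by unfold_locales (auto simp: rscale_def fun_eq_iff algebra_simps)

lemma fun_sum_apply: "(\<Sum>i\<in>I. (f i :: 'z \<Rightarrow> complex)) z = (\<Sum>i\<in>I. f i z)"
  by (induction I rule: infinite_finite_induct) auto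

lemma count_bound:
  fixes fam :: "'i \<Rightarrow> ('z \<Rightarrow> complex)" and R :: "'z set"
  assumes I: "finite I" and R: "finite R"
    and supp: "\<And>i z. i \<in> I \<Longrightarrow> z \<notin> R \<Longrightarrow> fam i z = 0"
    and ind: "\<And>c. (\<And>z. (\<Sum>i\<in>I. complex_of_real (c i) * fam i z) = 0) \<Longrightarrow> (\<forall>i\<in>I. c i = 0)"
  shows "card I \<le> 2 * card R"
proof -
  interpret vs: vector_space rscale by (rule rscale_vs)
  define T where "T = (\<lambda>p. (\<lambda>z. if z = p then (1::complex) else 0)) ` R \<union> (\<lambda>p. (\<lambda>z. if z = p then \<i> else 0)) ` R"
  have Tfin: "finite T" unfolding T_def using R by auto
  have Tcard: "card T \<le> 2 * card R"
  proof -
    have "card T \<le> card ((\<lambda>p. (\<lambda>z. if z = p then (1::complex) else 0)) ` R) + card ((\<lambda>p. (\<lambda>z. if z = p then \<i> else 0)) ` R)"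
      unfolding T_def by (rule card_Un_le)
    also have "\<dots> \<le> card R + card R" by (intro add_mono card_image_le R)
    finally show ?thesis by simp
  qed
  have sumeq: "(\<Sum>i\<in>I. rscale (c i) (fam i)) z = (\<Sum>i\<in>I. complex_of_real (c i) * fam i z)" for c z
    unfolding fun_sum_apply by (simp add: rscale_def)
  have injf: "inj_on fam I"
  proof (rule inj_onI)
    fix i j assume i: "i \<in> I" and j: "j \<in> I" and e: "fam i = fam j"
    show "i = j"
    proof (rule ccontr)
      assume ij: "i \<noteq> j"
      define c where "c = (\<lambda>k. if k = i then (1::real) else if k = j then -1 else 0)"
      have "(\<Sum>k\<in>I. complex_of_real (c k) * fam k z) = 0" for z
      proof -
        have "(\<Sum>k\<in>I. complex_of_real (c k) * fam k z) = (\<Sum>k\<in>I. (if k = i then fam i z else 0) + (if k = j then - fam j z else 0))"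
          by (rule sum.cong, auto simp: c_def ij)
        also have "\<dots> = fam i z - fam j z" using I i j by (simp add: sum.distrib)
        finally show ?thesis using e by simp
      qed
      then have "c i = 0" using ind i by blast
      then show False by (simp add: c_def)
    qed
  qed
  have indep: "vs.independent (fam ` I)"
  proof
    assume "vs.dependent (fam ` I)"
    then obtain u where u: "\<exists>v\<in>fam ` I. u v \<noteq> 0" and s: "(\<Sum>v\<in>fam ` I. rscale (u v) v) = 0"
      using vs.dependent_finite[of "fam ` I"] I by auto
    have "(\<Sum>i\<in>I. rscale (u (fam i)) (fam i)) = 0"
      using s sum.reindex[OF injf, of "\<lambda>v. rscale (u v) v"] by simp
    then have "\<And>z. (\<Sum>i\<in>I. complex_of_real (u (fam i)) * fam i z) = 0"
      using sumeq[of "\<lambda>i. u (fam i)"] by (metis zero_fun_apply)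
    then have "\<forall>i\<in>I. u (fam i) = 0" by (rule ind)
    then show False using u by auto
  qed
  have span: "fam ` I \<subseteq> vs.span T"
  proof
    fix f assume "f \<in> fam ` I"
    then obtain i where i: "i \<in> I" and f: "f = fam i" by auto
    have eq: "(\<Sum>p\<in>R. rscale (Re (f p)) (\<lambda>z. if z = p then (1::complex) else 0) + rscale (Im (f p)) (\<lambda>z. if z = p then \<i> else 0)) = f"
    proof (rule ext)
      fix z
      have "(\<Sum>p\<in>R. rscale (Re (f p)) (\<lambda>z. if z = p then (1::complex) else 0) + rscale (Im (f p)) (\<lambda>z. if z = p then \<i> else 0)) z
         = (\<Sum>p\<in>R. (if z = p then complex_of_real (Re (f p)) + complex_of_real (Im (f p)) * \<i> else 0))"
        unfolding fun_sum_apply by (rule sum.cong, auto simp: rscale_def)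
      also have "\<dots> = (if z \<in> R then complex_of_real (Re (f z)) + complex_of_real (Im (f z)) * \<i> else 0)"
        using R by (simp add: sum.delta)
      also have "\<dots> = f z" using supp[OF i, of z] f by (auto simp: complex_eq_iff)
      finally show "(\<Sum>p\<in>R. rscale (Re (f p)) (\<lambda>z. if z = p then (1::complex) else 0) + rscale (Im (f p)) (\<lambda>z. if z = p then \<i> else 0)) z = f z" .
    qed
    show "f \<in> vs.span T"
      by (subst eq[symmetric], intro vs.span_sum vs.span_add vs.span_scale vs.span_base, auto simp: T_def)
  qed
  have "card (fam ` I) \<le> card T" using vs.independent_span_bound[OF Tfin indep span] by simp
  moreover have "card (fam ` I) = card I" using card_image[OF injf] .
  ultimately show ?thesis using Tcard by simp
qed

lemma mtrace_prod2: assumes X: "X \<in> carrier_mat N N" and Y: "Y \<in> carrier_mat N N"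
  shows "mtrace (X * Y) = (\<Sum>i<N. \<Sum>k<N. X $$ (i,k) * Y $$ (k,i))"
  unfolding mtrace_def using X Y by (auto simp: scalar_prod_def lessThan_atLeast0 intro!: sum.cong)

lemma mtrace_lin: assumes X: "X \<in> carrier_mat N N" and M: "M \<in> carrier_mat N N"
  and h: "\<And>p. p \<in> J \<Longrightarrow> h p \<in> carrier_mat N N"
  and e: "\<And>k i. k < N \<Longrightarrow> i < N \<Longrightarrow> M $$ (k,i) = (\<Sum>p\<in>J. c p * h p $$ (k,i))"
  shows "mtrace (X * M) = (\<Sum>p\<in>J. c p * mtrace (X * h p))"
proof -
  have "mtrace (X * M) = (\<Sum>i<N. \<Sum>k<N. X $$ (i,k) * (\<Sum>p\<in>J. c p * h p $$ (k,i)))"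
    unfolding mtrace_prod2[OF X M] by (auto simp: e intro!: sum.cong)
  also have "\<dots> = (\<Sum>p\<in>J. c p * (\<Sum>i<N. \<Sum>k<N. X $$ (i,k) * h p $$ (k,i)))"
    by (simp add: sum_distrib_left sum.swap[of _ J] mult_ac)
  also have "\<dots> = (\<Sum>p\<in>J. c p * mtrace (X * h p))"
    by (rule sum.cong[OF refl], simp add: mtrace_prod2[OF X h])
  finally show ?thesis .
qed

lemma mtrace_herm_real: assumes X: "hermitian_op N X" and Y: "hermitian_op N Y"
  shows "Im (mtrace (X * Y)) = 0"
proof -
  have Xc: "X \<in> carrier_mat N N" and Yc: "Y \<in> carrier_mat N N" using X Y herm_carrier by auto
  have "cnj (mtrace (X * Y)) = (\<Sum>i<N. \<Sum>k<N. X $$ (k,i) * Y $$ (i,k))"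
    unfolding mtrace_prod2[OF Xc Yc] cnj_sum complex_cnj_mult
    by (auto intro!: sum.cong simp: herm_cnj[OF X] herm_cnj[OF Y])
  also have "\<dots> = mtrace (X * Y)"
    unfolding mtrace_prod2[OF Xc Yc] by (subst sum.swap, simp)
  finally show ?thesis by (metis Reals_cnj_iff complex_is_Real_iff)
qed

lemma trace_complete: assumes P: "\<And>r. r \<in> R \<Longrightarrow> P r \<in> carrier_mat N N"
  and sumP: "\<And>l k. l < N \<Longrightarrow> k < N \<Longrightarrow> (\<Sum>r\<in>R. P r $$ (l,k)) = (if l = k then 1 else 0)"
  and X: "X \<in> carrier_mat N N" and Y: "Y \<in> carrier_mat N N"
  shows "(\<Sum>r\<in>R. mtrace (X * P r * Y)) = mtrace (X * Y)"
proof -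
  have "(\<Sum>r\<in>R. mtrace (X * P r * Y)) = (\<Sum>r\<in>R. \<Sum>i<N. \<Sum>k<N. (\<Sum>l<N. X $$ (i,l) * P r $$ (l,k)) * Y $$ (k,i))"
  proof (rule sum.cong[OF refl])
    fix r assume r: "r \<in> R"
    have XP: "X * P r \<in> carrier_mat N N" using X P[OF r] by auto
    show "mtrace (X * P r * Y) = (\<Sum>i<N. \<Sum>k<N. (\<Sum>l<N. X $$ (i,l) * P r $$ (l,k)) * Y $$ (k,i))"
      unfolding mtrace_prod2[OF XP Y] using X P[OF r]
      by (auto intro!: sum.cong simp: scalar_prod_def lessThan_atLeast0)
  qed
  also have "\<dots> = (\<Sum>i<N. \<Sum>k<N. \<Sum>l<N. X $$ (i,l) * (\<Sum>r\<in>R. P r $$ (l,k)) * Y $$ (k,i))"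
    by (simp add: sum_distrib_left sum_distrib_right sum.swap[of _ R] mult_ac)
  also have "\<dots> = (\<Sum>i<N. \<Sum>k<N. X $$ (i,k) * Y $$ (k,i))"
  proof (intro sum.cong refl)
    fix i k assume "i \<in> {..<N}" "k \<in> {..<N}"
    then have k: "k < N" by auto
    have "(\<Sum>l<N. X $$ (i,l) * (\<Sum>r\<in>R. P r $$ (l,k)) * Y $$ (k,i)) = X $$ (i,k) * (\<Sum>r\<in>R. P r $$ (k,k)) * Y $$ (k,i)"
      by (rule sum_single, use k sumP in auto)
    then show "(\<Sum>l<N. X $$ (i,l) * (\<Sum>r\<in>R. P r $$ (l,k)) * Y $$ (k,i)) = X $$ (i,k) * Y $$ (k,i)"
      using sumP[OF k k] by simp
  qed
  also have "\<dots> = mtrace (X * Y)" using mtrace_prod2[OF X Y] by simp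
  finally show ?thesis .
qed

lemma spec_real: assumes h: "hermitian_op N A"
  defines "R \<equiv> {x::real. eigenvalue A (complex_of_real x)}"
  shows "finite R" "card R = num_eigenvalues A" "N > 0 \<Longrightarrow> R \<noteq> {}"
    "\<And>x. x \<notin> R \<Longrightarrow> eig_proj N A (complex_of_real x) = 0\<^sub>m N N"
    "\<And>x. eig_proj N A (complex_of_real x) \<in> carrier_mat N N"
    "\<And>x. x \<in> R \<Longrightarrow> hermitian_op N (eig_proj N A (complex_of_real x))"
    "\<And>i j. i < N \<Longrightarrow> j < N \<Longrightarrow> (\<Sum>x\<in>R. eig_proj N A (complex_of_real x) $$ (i,j)) = (if i = j then 1 else 0)"
proof -
  have SPR: "{x. eigenvalue A x} = complex_of_real ` R"
  proof
    show "{x. eigenvalue A x} \<subseteq> complex_of_real ` R"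
    proof
      fix a assume "a \<in> {x. eigenvalue A x}"
      moreover then have "cnj a = a" using SP_real[OF h] by auto
      then have "Im (cnj a) = Im a" by simp
      then have "Im a = 0" by simp
      then have "a = complex_of_real (Re a)" by (simp add: complex_eq_iff)
      ultimately show "a \<in> complex_of_real ` R" unfolding R_def by (auto intro!: image_eqI[of _ _ "Re a"])
    qed
  qed (auto simp: R_def)
  have inj: "inj_on complex_of_real R" by (auto intro: inj_onI)
  have finR: "finite R" using SP_fin[OF h] SPR finite_image_iff[OF inj] by simp
  then show "finite R" .
  show "card R = num_eigenvalues A" unfolding num_eigenvalues_def SPR card_image[OF inj] ..
  show "N > 0 \<Longrightarrow> R \<noteq> {}" using all_good(2)[OF h] SPR by auto
  show z: "\<And>x. x \<notin> R \<Longrightarrow> eig_proj N A (complex_of_real x) = 0\<^sub>m N N"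
    using eig_proj_zero[OF h] unfolding R_def by auto
  show "\<And>x. x \<in> R \<Longrightarrow> hermitian_op N (eig_proj N A (complex_of_real x))"
    using eig_proj_eq[OF h] proj_herm[OF h] unfolding R_def by auto
  show "\<And>x. eig_proj N A (complex_of_real x) \<in> carrier_mat N N"
  proof -
    fix x show "eig_proj N A (complex_of_real x) \<in> carrier_mat N N"
      using z[of x] eig_proj_eq[OF h, of "complex_of_real x"] proj_carrier[OF h] unfolding R_def
      by (cases "x \<in> R", auto simp: R_def)
  qed
  fix i j assume i: "i < N" and j: "j < N"
  have "(\<Sum>x\<in>R. eig_proj N A (complex_of_real x) $$ (i,j)) = (\<Sum>a\<in>{x. eigenvalue A x}. eig_proj N A a $$ (i,j))"
    unfolding SPR by (simp add: sum.reindex[OF inj])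
  also have "\<dots> = (\<Sum>a\<in>{x. eigenvalue A x}. proj N A a $$ (i,j))"
    using eig_proj_eq[OF h] by simp
  also have "\<dots> = (if i = j then 1 else 0)" using proj_sum[OF h i j] .
  finally show "(\<Sum>x\<in>R. eig_proj N A (complex_of_real x) $$ (i,j)) = (if i = j then 1 else 0)" .
qed

lemma quad_form: assumes M: "M \<in> carrier_mat N N" and v: "v \<in> carrier_vec N"
  shows "(M *\<^sub>v v) \<bullet>c v = (\<Sum>i<N. \<Sum>j<N. M $$ (i,j) * v $ j * cnj (v $ i))"
  using M v by (auto simp: cscalar_dim scalar_prod_def lessThan_atLeast0 sum_distrib_right intro!: sum.cong)

lemma self_inner: assumes v: "v \<in> carrier_vec N"
  shows "v \<bullet>c v = complex_of_real (\<Sum>i<N. (cmod (v $ i))\<^sup>2)"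
proof -
  have nz: "\<And>z::complex. z * cnj z = complex_of_real ((cmod z)\<^sup>2)" by (rule complex_norm_square[symmetric])
  have "v \<bullet>c v = (\<Sum>i<N. v $ i * cnj (v $ i))" using v by (simp add: cscalar_dim)
  also have "\<dots> = (\<Sum>i<N. complex_of_real ((cmod (v $ i))\<^sup>2))" by (simp only: nz)
  also have "\<dots> = complex_of_real (\<Sum>i<N. (cmod (v $ i))\<^sup>2)" by (rule of_real_sum[symmetric])
  finally show ?thesis .
qed

lemma quad_bound: assumes H: "hermitian_op N H" and v: "v \<in> carrier_vec N"
  defines "q \<equiv> (\<Sum>i<N. \<Sum>j<N. H $$ (i,j) * v $ j * cnj (v $ i))"
  shows "Im q = 0" "cmod q \<le> (\<Sum>i<N. \<Sum>j<N. cmod (H $$ (i,j))) * (\<Sum>i<N. (cmod (v $ i))\<^sup>2)"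
proof -
  have "cnj q = (\<Sum>i<N. \<Sum>j<N. H $$ (j,i) * cnj (v $ j) * v $ i)"
    unfolding q_def cnj_sum complex_cnj_mult by (auto intro!: sum.cong simp: herm_cnj[OF H])
  also have "\<dots> = q" unfolding q_def by (subst sum.swap, auto intro!: sum.cong simp: mult_ac)
  finally show "Im q = 0" by (metis Reals_cnj_iff complex_is_Real_iff)
  define s where "s = (\<Sum>i<N. (cmod (v $ i))\<^sup>2)"
  have s0: "0 \<le> s" unfolding s_def by (auto intro: sum_nonneg)
  have vi: "cmod (v $ i) \<le> sqrt s" if "i < N" for i
  proof -
    have "(cmod (v $ i))\<^sup>2 \<le> s" unfolding s_def using that by (intro member_le_sum) auto
    then show ?thesis using real_le_rsqrt by blast
  qed
  have "cmod q \<le> (\<Sum>i<N. \<Sum>j<N. cmod (H $$ (i,j) * v $ j * cnj (v $ i)))"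
    unfolding q_def by (rule order.trans[OF norm_sum sum_mono], rule norm_sum)
  also have "\<dots> \<le> (\<Sum>i<N. \<Sum>j<N. cmod (H $$ (i,j)) * s)"
  proof (intro sum_mono)
    fix i j assume "i \<in> {..<N}" "j \<in> {..<N}"
    then have i: "i < N" and j: "j < N" by auto
    have "cmod (v $ j) * cmod (v $ i) \<le> sqrt s * sqrt s"
      using vi[OF i] vi[OF j] s0 by (intro mult_mono, auto)
    also have "\<dots> = s" using s0 by simp
    finally have "cmod (v $ j) * cmod (v $ i) \<le> s" .
    then have "cmod (H $$ (i,j)) * (cmod (v $ j) * cmod (v $ i)) \<le> cmod (H $$ (i,j)) * s"
      by (intro mult_left_mono, auto)
    then show "cmod (H $$ (i,j) * v $ j * cnj (v $ i)) \<le> cmod (H $$ (i,j)) * s"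
      by (simp add: norm_mult mult_ac)
  qed
  also have "\<dots> = (\<Sum>i<N. \<Sum>j<N. cmod (H $$ (i,j))) * s" by (simp add: sum_distrib_right)
  finally show "cmod q \<le> (\<Sum>i<N. \<Sum>j<N. cmod (H $$ (i,j))) * (\<Sum>i<N. (cmod (v $ i))\<^sup>2)"
    unfolding s_def .
qed

lemma kd_zero_imp_zero:
  assumes N: "N > 0" and hA: "hermitian_op N A" and hB: "hermitian_op N B"
    and inj: "\<forall>\<rho> \<sigma>. density_op N \<rho> \<longrightarrow> density_op N \<sigma> \<longrightarrow> KD N A B \<rho> = KD N A B \<sigma> \<longrightarrow> \<rho> = \<sigma>"
    and H: "hermitian_op N H" and tr: "mtrace H = 0" and kd: "\<And>z. KD N A B H z = 0"
  shows "H = 0\<^sub>m N N"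
proof -
  have Hc: "H \<in> carrier_mat N N" using H herm_carrier by auto
  define C where "C = (\<Sum>i<N. \<Sum>j<N. cmod (H $$ (i,j)))"
  have C0: "0 \<le> C" unfolding C_def by (auto intro!: sum_nonneg)
  define t where "t = 1 / (real N * (C + 1))"
  have t0: "0 < t" unfolding t_def using N C0 by auto
  have tC: "t * C \<le> 1 / real N"
  proof -
    have "t * C = (1 / real N) * (C / (C + 1))" unfolding t_def by (simp add: field_simps)
    also have "\<dots> \<le> (1 / real N) * 1" using C0 by (intro mult_left_mono, auto)
    finally show ?thesis by simp
  qed
  define \<sigma> where "\<sigma> = mat N N (\<lambda>(i,j). if i = j then 1 / of_nat N else (0::complex))"
  define \<rho> where "\<rho> = mat N N (\<lambda>(i,j). \<sigma> $$ (i,j) + complex_of_real t * H $$ (i,j))"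
  have sc: "\<sigma> \<in> carrier_mat N N" and rc: "\<rho> \<in> carrier_mat N N" unfolding \<sigma>_def \<rho>_def by auto
  have Xc: "\<And>x y. eig_proj N A (complex_of_real x) * eig_proj N B (complex_of_real y) \<in> carrier_mat N N"
    using spec_real(5)[OF hA] spec_real(5)[OF hB] by (meson mult_carrier_mat)
  have kdeq: "KD N A B \<rho> = KD N A B \<sigma>"
  proof
    fix z :: "real \<times> real"
    obtain x y where z: "z = (x,y)" by (cases z)
    define X where "X = eig_proj N A (complex_of_real x) * eig_proj N B (complex_of_real y)"
    have X: "X \<in> carrier_mat N N" unfolding X_def by (rule Xc)
    have "mtrace (X * \<rho>) = (\<Sum>i<N. \<Sum>k<N. X $$ (i,k) * \<sigma> $$ (k,i)) + complex_of_real t * (\<Sum>i<N. \<Sum>k<N. X $$ (i,k) * H $$ (k,i))"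
      unfolding mtrace_prod2[OF X rc] using sc
      by (auto simp: \<rho>_def sum.distrib sum_distrib_left algebra_simps intro!: sum.cong)
    also have "(\<Sum>i<N. \<Sum>k<N. X $$ (i,k) * H $$ (k,i)) = 0"
      using kd[of z] unfolding KD_def z by (simp add: X_def[symmetric] mtrace_prod2[OF X Hc])
    finally have "mtrace (X * \<rho>) = mtrace (X * \<sigma>)" unfolding mtrace_prod2[OF X sc] by simp
    then show "KD N A B \<rho> z = KD N A B \<sigma> z" unfolding KD_def z X_def by simp
  qed
  have qs: "(\<sigma> *\<^sub>v v) \<bullet>c v = complex_of_real ((1 / real N) * (\<Sum>i<N. (cmod (v $ i))\<^sup>2))"
    if v: "v \<in> carrier_vec N" for v
  proof -
    have "(\<sigma> *\<^sub>v v) \<bullet>c v = (\<Sum>i<N. \<Sum>j<N. \<sigma> $$ (i,j) * v $ j * cnj (v $ i))" by (rule quad_form[OF sc v])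
    also have "\<dots> = (\<Sum>i<N. \<sigma> $$ (i,i) * v $ i * cnj (v $ i))"
      by (rule sum.cong[OF refl], rule sum_single, auto simp: \<sigma>_def)
    also have "\<dots> = (1 / of_nat N) * (v \<bullet>c v)"
      using v by (auto simp: \<sigma>_def cscalar_dim sum_distrib_left intro!: sum.cong)
    also have "\<dots> = complex_of_real ((1 / real N) * (\<Sum>i<N. (cmod (v $ i))\<^sup>2))"
      unfolding self_inner[OF v] by simp
    finally show ?thesis .
  qed
  have dens_s: "density_op N \<sigma>"
    unfolding density_op_def psd_op_def
  proof (intro conjI ballI sc)
    fix v :: "complex vec" assume v: "v \<in> carrier_vec N"
    show "(\<sigma> *\<^sub>v v) \<bullet>c v \<in> \<real>" unfolding qs[OF v] by simp
    show "0 \<le> Re ((\<sigma> *\<^sub>v v) \<bullet>c v)" unfolding qs[OF v] by (auto intro!: sum_nonneg divide_nonneg_nonneg)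
  next
    have "mtrace \<sigma> = (\<Sum>i<N. 1 / of_nat N)" unfolding mtrace_def \<sigma>_def by simp
    also have "\<dots> = 1" using N by simp
    finally show "mtrace \<sigma> = 1" .
  qed
  have dens_r: "density_op N \<rho>"
    unfolding density_op_def psd_op_def
  proof (intro conjI ballI rc)
    fix v :: "complex vec" assume v: "v \<in> carrier_vec N"
    define s where "s = (\<Sum>i<N. (cmod (v $ i))\<^sup>2)"
    have s0: "0 \<le> s" unfolding s_def by (auto intro: sum_nonneg)
    define q where "q = (\<Sum>i<N. \<Sum>j<N. H $$ (i,j) * v $ j * cnj (v $ i))"
    have q: "Im q = 0" "cmod q \<le> C * s" using quad_bound[OF H v] unfolding q_def C_def s_def by auto
    have "(\<rho> *\<^sub>v v) \<bullet>c v = (\<Sum>i<N. \<Sum>j<N. \<sigma> $$ (i,j) * v $ j * cnj (v $ i)) + complex_of_real t * q"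
      unfolding quad_form[OF rc v] q_def using sc
      by (auto simp: \<rho>_def sum.distrib sum_distrib_left algebra_simps intro!: sum.cong)
    also have "(\<Sum>i<N. \<Sum>j<N. \<sigma> $$ (i,j) * v $ j * cnj (v $ i)) = complex_of_real ((1 / real N) * s)"
      using qs[OF v] quad_form[OF sc v] unfolding s_def by simp
    finally have e: "(\<rho> *\<^sub>v v) \<bullet>c v = complex_of_real ((1 / real N) * s) + complex_of_real t * q" .
    show "(\<rho> *\<^sub>v v) \<bullet>c v \<in> \<real>" unfolding e using q(1) by (simp add: complex_is_Real_iff)
    have "- (C * s) \<le> Re q" using q(2) abs_Re_le_cmod[of q] by linarith
    then have "t * (- (C * s)) \<le> t * Re q" using t0 by (intro mult_left_mono) auto
    moreover have "t * C * s \<le> (1 / real N) * s" using tC s0 by (intro mult_right_mono) auto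
    ultimately have "0 \<le> (1 / real N) * s + t * Re q" by (simp add: algebra_simps)
    then show "0 \<le> Re ((\<rho> *\<^sub>v v) \<bullet>c v)" unfolding e by simp
  next
    have "mtrace \<rho> = (\<Sum>i<N. 1 / of_nat N) + complex_of_real t * mtrace H"
      unfolding mtrace_def \<rho>_def \<sigma>_def using Hc by (simp add: sum.distrib sum_distrib_left)
    also have "\<dots> = 1" using N tr by simp
    finally show "mtrace \<rho> = 1" .
  qed
  have "\<rho> = \<sigma>" using inj dens_r dens_s kdeq by blast
  show "H = 0\<^sub>m N N"
  proof (rule eq_matI)
    fix i j assume "i < dim_row (0\<^sub>m N N :: complex mat)" "j < dim_col (0\<^sub>m N N :: complex mat)"
    then have i: "i < N" and j: "j < N" by auto
    have "\<rho> $$ (i,j) = \<sigma> $$ (i,j)" using \<open>\<rho> = \<sigma>\<close> by simp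
    then have "complex_of_real t * H $$ (i,j) = 0" unfolding \<rho>_def using i j by simp
    then show "H $$ (i,j) = 0\<^sub>m N N $$ (i,j)" using t0 i j by simp
  qed (use Hc in auto)
qed

definition hbe :: "nat \<Rightarrow> nat \<Rightarrow> nat \<Rightarrow> nat \<Rightarrow> nat \<Rightarrow> complex" where
  "hbe N j k r s = (if j < k then (if (r = j \<and> s = k) \<or> (r = k \<and> s = j) then 1 else 0)
     else if k < j then (if r = j \<and> s = k then \<i> else if r = k \<and> s = j then - \<i> else 0)
     else (if r = j \<and> s = j then 1 else if r = N - 1 \<and> s = N - 1 then -1 else 0))"

lemma hbe_herm: "hbe N j k r s = cnj (hbe N j k s r)"
  unfolding hbe_def by (cases "j < k"; cases "k < j"; auto)

lemma hbe_coord: assumes "j < N" "k < N" "(j,k) \<noteq> (N - 1, N - 1)" "m < N" "l < N" "(m,l) \<noteq> (N - 1, N - 1)"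
  shows "(if k < j then Im (hbe N m l j k) else Re (hbe N m l j k)) = (if (j,k) = (m,l) then 1 else 0)"
  using assms unfolding hbe_def by (cases "m < l"; cases "l < m"; cases "k < j"; cases "j < k"; auto)

definition hb :: "nat \<Rightarrow> nat \<times> nat \<Rightarrow> complex mat" where
  "hb N p = mat N N (\<lambda>(r,s). hbe N (fst p) (snd p) r s)"

definition Idx :: "nat \<Rightarrow> (nat \<times> nat) set" where
  "Idx N = ({..<N} \<times> {..<N}) - {(N - 1, N - 1)}"

definition coord :: "nat \<times> nat \<Rightarrow> complex mat \<Rightarrow> real" where
  "coord p M = (if snd p < fst p then Im (M $$ p) else Re (M $$ p))"

lemma hb_carrier: "hb N p \<in> carrier_mat N N" unfolding hb_def by auto

lemma hb_herm: "hermitian_op N (hb N p)"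
proof (rule hermI[OF hb_carrier])
  fix i j assume "i < N" "j < N"
  then have "hb N p $$ (i,j) = hbe N (fst p) (snd p) i j" "hb N p $$ (j,i) = hbe N (fst p) (snd p) j i"
    by (simp_all add: hb_def)
  then show "hb N p $$ (i,j) = cnj (hb N p $$ (j,i))" using hbe_herm by metis
qed

lemma Idx_fin: "finite (Idx N)" unfolding Idx_def by auto

lemma Idx_card: "N > 0 \<Longrightarrow> card (Idx N) = N * N - 1"
  unfolding Idx_def by (subst card_Diff_singleton, auto)

lemma hb_trace: assumes p: "p \<in> Idx N" shows "mtrace (hb N p) = 0"
proof -
  obtain j k where pjk: "p = (j,k)" by (cases p)
  have jk: "j < N" "k < N" "(j,k) \<noteq> (N - 1, N - 1)" using p unfolding Idx_def pjk by auto
  have "mtrace (hb N p) = (\<Sum>r<N. hbe N j k r r)" unfolding mtrace_def hb_def pjk by simp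
  also have "\<dots> = 0"
  proof (cases "j = k")
    case True
    then have jN: "j \<noteq> N - 1" using jk by auto
    have "(\<Sum>r<N. hbe N j k r r) = (\<Sum>r<N. (if r = j then 1 else 0) - (if r = N - 1 then 1 else 0))"
      using True jN by (intro sum.cong, auto simp: hbe_def)
    also have "\<dots> = 0" using jk by (simp add: sum_subtractf)
    finally show ?thesis .
  next
    case False
    then show ?thesis by (auto simp: hbe_def intro!: sum.neutral)
  qed
  finally show ?thesis .
qed

lemma coord_hb: assumes p: "p \<in> Idx N" and q: "q \<in> Idx N"
  shows "coord p (hb N q) = (if p = q then 1 else 0)"
proof -
  obtain j k where pjk: "p = (j,k)" by (cases p)
  obtain m l where qml: "q = (m,l)" by (cases q)
  have jk: "j < N" "k < N" "(j,k) \<noteq> (N - 1, N - 1)" using p unfolding Idx_def pjk by auto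
  have ml: "m < N" "l < N" "(m,l) \<noteq> (N - 1, N - 1)" using q unfolding Idx_def qml by auto
  have e: "hb N (m,l) $$ (j,k) = hbe N m l j k" using jk by (simp add: hb_def)
  have "coord (j,k) (hb N (m,l)) = (if k < j then Im (hbe N m l j k) else Re (hbe N m l j k))"
    unfolding coord_def e by simp
  also have "\<dots> = (if (j,k) = (m,l) then 1 else 0)" by (rule hbe_coord[OF jk ml])
  finally show ?thesis unfolding pjk qml .
qed

definition Hcomb :: "nat \<Rightarrow> (nat \<times> nat \<Rightarrow> real) \<Rightarrow> complex mat" where
  "Hcomb N c = mat N N (\<lambda>(r,s). \<Sum>q\<in>Idx N. complex_of_real (c q) * hb N q $$ (r,s))"

lemma Hcomb_carrier: "Hcomb N c \<in> carrier_mat N N" unfolding Hcomb_def by auto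

lemma Hcomb_herm: "hermitian_op N (Hcomb N c)"
proof (rule hermI[OF Hcomb_carrier])
  fix i j assume i: "i < N" and j: "j < N"
  show "Hcomb N c $$ (i,j) = cnj (Hcomb N c $$ (j,i))"
    unfolding Hcomb_def using i j
    by (auto simp: cnj_sum herm_cnj[OF hb_herm] intro!: sum.cong)
qed

lemma Hcomb_trace: "mtrace (Hcomb N c) = 0"
proof -
  have "mtrace (Hcomb N c) = (\<Sum>r<N. \<Sum>q\<in>Idx N. complex_of_real (c q) * hb N q $$ (r,r))"
    unfolding mtrace_def Hcomb_def by simp
  also have "\<dots> = (\<Sum>q\<in>Idx N. complex_of_real (c q) * mtrace (hb N q))"
    unfolding mtrace_def hb_carrier by (subst sum.swap, simp add: sum_distrib_left hb_def)
  also have "\<dots> = 0" by (simp add: hb_trace)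
  finally show ?thesis .
qed

lemma coord_Hcomb: assumes p: "p \<in> Idx N" shows "coord p (Hcomb N c) = c p"
proof -
  have pN: "fst p < N" "snd p < N" using p unfolding Idx_def by auto
  have "coord p (Hcomb N c) = (\<Sum>q\<in>Idx N. c q * coord p (hb N q))"
    unfolding coord_def Hcomb_def using pN by (cases p, auto simp: Im_sum Re_sum)
  also have "\<dots> = (\<Sum>q\<in>Idx N. c q * (if p = q then 1 else 0))"
    using coord_hb[OF p] by simp
  also have "\<dots> = c p" using p Idx_fin[of N] by (simp add: if_distrib sum.delta cong: if_cong)
  finally show ?thesis .
qed

lemma num_eig_zero: assumes "hermitian_op 0 A" shows "num_eigenvalues A = 0"
proof -
  have ne: "\<not> eigenvalue A x" for x
  proof
    assume "eigenvalue A x"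
    then obtain v where "eigenvector A v x" unfolding eigenvalue_def by auto
    moreover have "dim_row A = 0" using herm_carrier[OF assms] by auto
    ultimately have v: "v \<in> carrier_vec 0" "v \<noteq> 0\<^sub>v 0" unfolding eigenvector_def by auto
    have "v = 0\<^sub>v 0" using v(1) by (intro eq_vecI) auto
    then show False using v(2) by simp
  qed
  have e: "{x. eigenvalue A x} = {}" using ne by blast
  show ?thesis unfolding num_eigenvalues_def e by simp
qed

lemma sum_all: "(\<Sum>z\<in>A\<times>B. g z) = (\<Sum>a\<in>A. \<Sum>b\<in>B. g (a,b))"
  by (simp add: sum.cartesian_product)

lemma sum_row: "(\<Sum>z\<in>{a}\<times>B. g z) = (\<Sum>b\<in>B. g (a,b))"
  by (simp add: sum_all)

lemma sum_col: "(\<Sum>z\<in>A\<times>{b}. g z) = (\<Sum>a\<in>A. g (a,b))"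
  by (simp add: sum_all)

lemma sum_pick: assumes "finite I" "t \<in> I" "\<And>i. i \<in> I \<Longrightarrow> \<Phi> i = (if i = t then 1 else 0)"
  shows "(\<Sum>i\<in>I. c i * \<Phi> i) = (c t :: real)"
proof -
  have "(\<Sum>i\<in>I. c i * \<Phi> i) = c t * \<Phi> t" by (rule sum_single, use assms in auto)
  then show ?thesis using assms by simp
qed

theorem proposition11:
  fixes N :: nat and A B :: "complex mat"
  assumes "hermitian_op N A" and "hermitian_op N B"
    and "\<forall>\<rho> \<sigma>. density_op N \<rho> \<longrightarrow> density_op N \<sigma> \<longrightarrow> KD N A B \<rho> = KD N A B \<sigma> \<longrightarrow> \<rho> = \<sigma>"
  shows "2 * int N ^ 2 - 1 \<le> (2 * int (num_eigenvalues A) - 1) * (2 * int (num_eigenvalues B) - 1)"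
proof (cases "N = 0")
  case True
  then show ?thesis using num_eig_zero assms(1,2) by simp
next
  case False
  then have N: "N > 0" by simp
  note hA = assms(1) and hB = assms(2) and inj = assms(3)
  define RA where "RA = {x::real. eigenvalue A (complex_of_real x)}"
  define RB where "RB = {x::real. eigenvalue B (complex_of_real x)}"
  note sA = spec_real[OF hA, folded RA_def]
  note sB = spec_real[OF hB, folded RB_def]
  obtain a0 where a0: "a0 \<in> RA" using sA(3) N by auto
  obtain b0 where b0: "b0 \<in> RB" using sB(3) N by auto
  define E where "E = (\<lambda>x::real. eig_proj N A (complex_of_real x))"
  define F where "F = (\<lambda>x::real. eig_proj N B (complex_of_real x))"
  have Ec: "\<And>x. E x \<in> carrier_mat N N" and Fc: "\<And>x. F x \<in> carrier_mat N N"
    unfolding E_def F_def using sA(5) sB(5) by auto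
  have Eh: "\<And>x. x \<in> RA \<Longrightarrow> hermitian_op N (E x)" and Fh: "\<And>x. x \<in> RB \<Longrightarrow> hermitian_op N (F x)"
    unfolding E_def F_def using sA(6) sB(6) by auto
  have Ez: "\<And>x. x \<notin> RA \<Longrightarrow> E x = 0\<^sub>m N N" and Fz: "\<And>x. x \<notin> RB \<Longrightarrow> F x = 0\<^sub>m N N"
    unfolding E_def F_def using sA(4) sB(4) by auto
  have Es: "\<And>l k. l < N \<Longrightarrow> k < N \<Longrightarrow> (\<Sum>x\<in>RA. E x $$ (l,k)) = (if l = k then 1 else 0)"
    and Fs: "\<And>l k. l < N \<Longrightarrow> k < N \<Longrightarrow> (\<Sum>x\<in>RB. F x $$ (l,k)) = (if l = k then 1 else 0)"
    unfolding E_def F_def using sA(7) sB(7) by auto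
  have finA: "finite RA" and finB: "finite RB" using sA(1) sB(1) by auto
  have KDe: "\<And>M x y. KD N A B M (x,y) = mtrace (E x * F y * M)" unfolding KD_def E_def F_def by simp
  have rowsum: "\<And>a h. h \<in> carrier_mat N N \<Longrightarrow> (\<Sum>b\<in>RB. mtrace (E a * F b * h)) = mtrace (E a * h)"
    by (rule trace_complete[OF Fc Fs Ec], auto)
  have totsum: "\<And>h. h \<in> carrier_mat N N \<Longrightarrow> (\<Sum>a\<in>RA. mtrace (E a * h)) = mtrace h"
  proof -
    fix h :: "complex mat" assume h: "h \<in> carrier_mat N N"
    have "(\<Sum>a\<in>RA. mtrace (1\<^sub>m N * E a * h)) = mtrace (1\<^sub>m N * h)"
      by (rule trace_complete[OF Ec Es _ h], auto)
    moreover have "\<And>a. 1\<^sub>m N * E a = E a" using Ec left_mult_one_mat by blast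
    moreover have "1\<^sub>m N * h = h" using h left_mult_one_mat by blast
    ultimately show "(\<Sum>a\<in>RA. mtrace (E a * h)) = mtrace h" by simp
  qed
  have colsum: "\<And>b h. h \<in> carrier_mat N N \<Longrightarrow> (\<Sum>a\<in>RA. mtrace (E a * F b * h)) = mtrace (F b * h)"
  proof -
    fix b and h :: "complex mat" assume h: "h \<in> carrier_mat N N"
    have "(\<Sum>a\<in>RA. mtrace (E a * F b * h)) = (\<Sum>a\<in>RA. mtrace (E a * (F b * h)))"
      using assoc_mult_mat[OF Ec Fc h] by simp
    also have "\<dots> = mtrace (F b * h)" using totsum[OF mult_carrier_mat[OF Fc[of b] h]] .
    finally show "(\<Sum>a\<in>RA. mtrace (E a * F b * h)) = mtrace (F b * h)" .
  qed
  define I :: "((nat \<times> nat) + (real + real)) set" where "I = Inl ` Idx N \<union> Inr ` (Inl ` RA \<union> Inr ` RB)"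
  define fam :: "((nat \<times> nat) + (real + real)) \<Rightarrow> real \<times> real \<Rightarrow> complex" where
    "fam = (\<lambda>i. case i of Inl p \<Rightarrow> KD N A B (hb N p)
       | Inr (Inl a) \<Rightarrow> (\<lambda>z. if z = (a,b0) then \<i> else 0)
       | Inr (Inr b) \<Rightarrow> (if b = b0 then (\<lambda>z. if z = (a0,b0) then 1 else 0)
            else (\<lambda>z. (if z = (a0,b) then \<i> else 0) - (if z = (a0,b0) then \<i> else 0))))"
  have famL: "\<And>p. fam (Inl p) = KD N A B (hb N p)"
    and famA: "\<And>a. fam (Inr (Inl a)) = (\<lambda>z. if z = (a,b0) then \<i> else 0)"
    and famB0: "fam (Inr (Inr b0)) = (\<lambda>z. if z = (a0,b0) then 1 else 0)"
    and famB: "\<And>b. b \<noteq> b0 \<Longrightarrow> fam (Inr (Inr b)) = (\<lambda>z. (if z = (a0,b) then \<i> else 0) - (if z = (a0,b0) then \<i> else 0))"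
    unfolding fam_def by auto
  have Ifin: "finite I" unfolding I_def using finA finB Idx_fin by auto
  have Icases: "\<And>i. i \<in> I \<Longrightarrow> (\<exists>p\<in>Idx N. i = Inl p) \<or> (\<exists>a\<in>RA. i = Inr (Inl a)) \<or> (\<exists>b\<in>RB. i = Inr (Inr b))"
    unfolding I_def by auto
  have Icard: "card I = card (Idx N) + (card RA + card RB)"
  proof -
    have "card I = card (Inl ` Idx N :: ((nat \<times> nat) + (real + real)) set) + card (Inr ` (Inl ` RA \<union> Inr ` RB) :: ((nat \<times> nat) + (real + real)) set)"
      unfolding I_def by (rule card_Un_disjoint, use finA finB Idx_fin in auto)
    also have "card (Inl ` Idx N :: ((nat \<times> nat) + (real + real)) set) = card (Idx N)"
      by (rule card_image, auto simp: inj_on_def)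
    also have "card (Inr ` (Inl ` RA \<union> Inr ` RB) :: ((nat \<times> nat) + (real + real)) set) = card (Inl ` RA \<union> Inr ` RB :: (real + real) set)"
      by (rule card_image, auto simp: inj_on_def)
    also have "card (Inl ` RA \<union> Inr ` RB :: (real + real) set) = card (Inl ` RA :: (real + real) set) + card (Inr ` RB :: (real + real) set)"
      by (rule card_Un_disjoint, use finA finB in auto)
    also have "card (Inl ` RA :: (real + real) set) = card RA" by (rule card_image, auto simp: inj_on_def)
    also have "card (Inr ` RB :: (real + real) set) = card RB" by (rule card_image, auto simp: inj_on_def)
    finally show ?thesis .
  qed
  have sumI: "\<And>f. sum f I = (\<Sum>p\<in>Idx N. f (Inl p)) + ((\<Sum>a\<in>RA. f (Inr (Inl a))) + (\<Sum>b\<in>RB. f (Inr (Inr b))))"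
  proof -
    fix f :: "((nat \<times> nat) + (real + real)) \<Rightarrow> 'x::comm_monoid_add"
    have "sum f I = sum f (Inl ` Idx N) + sum f (Inr ` (Inl ` RA \<union> Inr ` RB))"
      unfolding I_def by (rule sum.union_disjoint, use finA finB Idx_fin in auto)
    also have "sum f (Inl ` Idx N) = (\<Sum>p\<in>Idx N. f (Inl p))" by (subst sum.reindex, auto simp: inj_on_def)
    also have "sum f (Inr ` (Inl ` RA \<union> Inr ` RB)) = (\<Sum>x\<in>Inl ` RA \<union> Inr ` RB. f (Inr x))"
      by (subst sum.reindex, auto simp: inj_on_def)
    also have "\<dots> = (\<Sum>x\<in>Inl ` RA. f (Inr x)) + (\<Sum>x\<in>Inr ` RB. f (Inr x))"
      by (rule sum.union_disjoint, use finA finB in auto)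
    also have "(\<Sum>x\<in>Inl ` RA. f (Inr x)) = (\<Sum>a\<in>RA. f (Inr (Inl a)))" by (subst sum.reindex, auto simp: inj_on_def)
    also have "(\<Sum>x\<in>Inr ` RB. f (Inr x)) = (\<Sum>b\<in>RB. f (Inr (Inr b)))" by (subst sum.reindex, auto simp: inj_on_def)
    finally show "sum f I = (\<Sum>p\<in>Idx N. f (Inl p)) + ((\<Sum>a\<in>RA. f (Inr (Inl a))) + (\<Sum>b\<in>RB. f (Inr (Inr b))))" .
  qed
  have supp: "\<And>i z. i \<in> I \<Longrightarrow> z \<notin> RA \<times> RB \<Longrightarrow> fam i z = 0"
  proof -
    fix i z assume i: "i \<in> I" and z: "z \<notin> RA \<times> RB"
    obtain x y where xy: "z = (x,y)" by (cases z)
    show "fam i z = 0"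
    proof (cases "\<exists>p\<in>Idx N. i = Inl p")
      case True
      then obtain p where p: "i = Inl p" by auto
      have "E x * F y = 0\<^sub>m N N"
      proof (cases "x \<in> RA")
        case True
        then have "y \<notin> RB" using z xy by auto
        then show ?thesis using Fz Ec right_mult_zero_mat by metis
      next
        case False then show ?thesis using Ez Fc left_mult_zero_mat by metis
      qed
      then have "mtrace (E x * F y * hb N p) = 0" using hb_carrier[of N p]
        by (simp add: mtrace_def)
      then show ?thesis unfolding p famL xy KDe .
    next
      case False
      then have "(\<exists>a\<in>RA. i = Inr (Inl a)) \<or> (\<exists>b\<in>RB. i = Inr (Inr b))" using Icases[OF i] by auto
      then show ?thesis
      proof
        assume "\<exists>a\<in>RA. i = Inr (Inl a)"
        then obtain a where "a \<in> RA" "i = Inr (Inl a)" by auto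
        then show ?thesis using z b0 famA by auto
      next
        assume "\<exists>b\<in>RB. i = Inr (Inr b)"
        then obtain b where "b \<in> RB" "i = Inr (Inr b)" by auto
        then show ?thesis using z a0 b0 famB0 famB by (cases "b = b0", auto)
      qed
    qed
  qed
  have ind: "\<And>c. (\<And>z. (\<Sum>i\<in>I. complex_of_real (c i) * fam i z) = 0) \<Longrightarrow> (\<forall>i\<in>I. c i = 0)"
  proof -
    fix c :: "((nat \<times> nat) + (real + real)) \<Rightarrow> real"
    assume G: "\<And>z. (\<Sum>i\<in>I. complex_of_real (c i) * fam i z) = 0"
    have lin: "(\<Sum>i\<in>I. complex_of_real (c i) * (\<Sum>z\<in>Z. fam i z)) = 0" for Z
    proof -
      have "(\<Sum>i\<in>I. complex_of_real (c i) * (\<Sum>z\<in>Z. fam i z)) = (\<Sum>z\<in>Z. \<Sum>i\<in>I. complex_of_real (c i) * fam i z)"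
        by (simp add: sum_distrib_left sum.swap[of _ Z])
      also have "\<dots> = 0" using G by simp
      finally show ?thesis .
    qed
    have linIm: "(\<Sum>i\<in>I. c i * Im (\<Sum>z\<in>Z. fam i z)) = 0" for Z
      using arg_cong[OF lin[of Z], of Im] by (simp add: Im_sum)
    have linRe: "(\<Sum>i\<in>I. c i * Re (\<Sum>z\<in>Z. fam i z)) = 0" for Z
      using arg_cong[OF lin[of Z], of Re] by (simp add: Re_sum)
    have cA: "c (Inr (Inl a)) = 0" if a: "a \<in> RA" for a
    proof -
      have "(\<Sum>i\<in>I. c i * Im (\<Sum>z\<in>{a} \<times> RB. fam i z)) = c (Inr (Inl a))"
      proof (rule sum_pick[OF Ifin])
        show "Inr (Inl a) \<in> I" unfolding I_def using a by auto
        fix i assume i: "i \<in> I"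
        show "Im (\<Sum>z\<in>{a} \<times> RB. fam i z) = (if i = Inr (Inl a) then 1 else 0)"
        proof -
          consider (L) p where "p \<in> Idx N" "i = Inl p" | (A) a' where "a' \<in> RA" "i = Inr (Inl a')"
            | (B) b where "b \<in> RB" "i = Inr (Inr b)" using Icases[OF i] by auto
          then show ?thesis
          proof cases
            case L
            have "(\<Sum>z\<in>{a} \<times> RB. fam i z) = mtrace (E a * hb N p)"
              unfolding L famL sum_row KDe using rowsum[OF hb_carrier] .
            then show ?thesis using mtrace_herm_real[OF Eh[OF a] hb_herm] L by simp
          next
            case A
            then show ?thesis using finB b0 by (simp add: famA sum.delta)
          next
            case B
            then show ?thesis using finB b0 famB0 famB by (cases "b = b0", auto simp: sum.delta sum_subtractf)
          qed
        qed
      qed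
      then show ?thesis using linIm by simp
    qed
    have cB: "c (Inr (Inr b)) = 0" if b: "b \<in> RB" "b \<noteq> b0" for b
    proof -
      have "(\<Sum>i\<in>I. c i * Im (\<Sum>z\<in>RA \<times> {b}. fam i z)) = c (Inr (Inr b))"
      proof (rule sum_pick[OF Ifin])
        show "Inr (Inr b) \<in> I" unfolding I_def using b by auto
        fix i assume i: "i \<in> I"
        show "Im (\<Sum>z\<in>RA \<times> {b}. fam i z) = (if i = Inr (Inr b) then 1 else 0)"
        proof -
          consider (L) p where "p \<in> Idx N" "i = Inl p" | (A) a' where "a' \<in> RA" "i = Inr (Inl a')"
            | (B) b' where "b' \<in> RB" "i = Inr (Inr b')" using Icases[OF i] by auto
          then show ?thesis
          proof cases
            case L
            have "(\<Sum>z\<in>RA \<times> {b}. fam i z) = mtrace (F b * hb N p)"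
              unfolding L famL sum_col KDe using colsum[OF hb_carrier] .
            then show ?thesis using mtrace_herm_real[OF Fh[OF b(1)] hb_herm] L by simp
          next
            case A
            then show ?thesis using finA b by (simp add: famA sum.delta)
          next
            case B
            then show ?thesis using finA a0 b famB0 famB by (cases "b' = b0", auto simp: sum.delta sum_subtractf)
          qed
        qed
      qed
      then show ?thesis using linIm by simp
    qed
    have cB0: "c (Inr (Inr b0)) = 0"
    proof -
      have "(\<Sum>i\<in>I. c i * Re (\<Sum>z\<in>RA \<times> RB. fam i z)) = c (Inr (Inr b0))"
      proof (rule sum_pick[OF Ifin])
        show "Inr (Inr b0) \<in> I" unfolding I_def using b0 by auto
        fix i assume i: "i \<in> I"
        show "Re (\<Sum>z\<in>RA \<times> RB. fam i z) = (if i = Inr (Inr b0) then 1 else 0)"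
        proof -
          consider (L) p where "p \<in> Idx N" "i = Inl p" | (A) a' where "a' \<in> RA" "i = Inr (Inl a')"
            | (B) b' where "b' \<in> RB" "i = Inr (Inr b')" using Icases[OF i] by auto
          then show ?thesis
          proof cases
            case L
            have "(\<Sum>z\<in>RA \<times> RB. fam i z) = (\<Sum>a\<in>RA. mtrace (E a * hb N p))"
              unfolding L famL sum_all KDe using rowsum[OF hb_carrier] by simp
            also have "\<dots> = mtrace (hb N p)" by (rule totsum[OF hb_carrier])
            also have "\<dots> = 0" using hb_trace L by simp
            finally show ?thesis using L by simp
          next
            case A
            then show ?thesis using finA finB b0 by (simp add: famA sum.delta)
          next
            case B
            then show ?thesis using finA finB a0 b0 famB0 famB by (cases "b' = b0", auto simp: sum.delta sum_subtractf)
          qed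
        qed
      qed
      then show ?thesis using linRe by simp
    qed
    have cBall: "\<And>b. b \<in> RB \<Longrightarrow> c (Inr (Inr b)) = 0" using cB cB0 by metis
    define cc where "cc = (\<lambda>q. c (Inl q))"
    have kdH: "KD N A B (Hcomb N cc) z = 0" for z
    proof -
      obtain x y where xy: "z = (x,y)" by (cases z)
      have X: "E x * F y \<in> carrier_mat N N" using Ec Fc by (meson mult_carrier_mat)
      have "KD N A B (Hcomb N cc) z = (\<Sum>q\<in>Idx N. complex_of_real (cc q) * mtrace (E x * F y * hb N q))"
        unfolding xy KDe
        by (rule mtrace_lin[OF X Hcomb_carrier hb_carrier], simp add: Hcomb_def)
      also have "\<dots> = (\<Sum>i\<in>I. complex_of_real (c i) * fam i z)"
        unfolding sumI using cA cBall by (auto simp: cc_def famL xy KDe intro!: sum.neutral)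
      also have "\<dots> = 0" by (rule G)
      finally show ?thesis .
    qed
    have H0: "Hcomb N cc = 0\<^sub>m N N"
      by (rule kd_zero_imp_zero[OF N hA hB inj Hcomb_herm Hcomb_trace kdH])
    have cL: "c (Inl p) = 0" if p: "p \<in> Idx N" for p
    proof -
      have "c (Inl p) = coord p (Hcomb N cc)" using coord_Hcomb[OF p, of cc] unfolding cc_def by simp
      also have "\<dots> = coord p (0\<^sub>m N N)" unfolding H0 ..
      also have "\<dots> = 0" using p unfolding coord_def Idx_def by (cases p, auto)
      finally show ?thesis .
    qed
    show "\<forall>i\<in>I. c i = 0"
    proof
      fix i assume i: "i \<in> I"
      then show "c i = 0" using Icases[OF i] cL cA cB cB0 by (cases "i = Inr (Inr b0)", auto)
    qed
  qed
  have "card I \<le> 2 * card (RA \<times> RB)"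
    by (rule count_bound[OF Ifin _ supp ind], use finA finB in auto)
  then have "card (Idx N) + (card RA + card RB) \<le> 2 * (card RA * card RB)"
    unfolding Icard card_cartesian_product .
  then have key: "N * N - 1 + (num_eigenvalues A + num_eigenvalues B) \<le> 2 * (num_eigenvalues A * num_eigenvalues B)"
    using Idx_card[OF N] sA(2) sB(2) by simp
  have NN: "1 \<le> N * N" using N by (simp add: Suc_le_eq)
  have "int (N * N) - 1 + (int (num_eigenvalues A) + int (num_eigenvalues B)) \<le> 2 * (int (num_eigenvalues A) * int (num_eigenvalues B))"
  proof -
    have "int (N * N - 1 + (num_eigenvalues A + num_eigenvalues B)) \<le> int (2 * (num_eigenvalues A * num_eigenvalues B))"
      using key by (subst of_nat_le_iff)
    moreover have "int (N * N - 1) = int (N * N) - 1" using NN by (simp add: of_nat_diff)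
    ultimately show ?thesis by simp
  qed
  then show ?thesis by (simp add: power2_eq_square algebra_simps)
qed

end
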